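(* Let $m\ge2$ and $p\in\{1,\ldots,m-1\}$, and let $\mathbb{L}^pu=\mathrm{d}_tu+ia(t)\wedge P(x,D_x)u$ be as in the context. Then $\mathbb{L}^p$ is not globally hypoelliptic, i.e. there exists $u\in\mathscr{F}'_{\mu,p}\setminus\mathscr{F}_{\mu,p}$ with $\mathbb{L}^pu\in\mathscr{F}_{\mu,p+1}$.
   Context: $\mathbb{T}^m=(\mathbb{R}/2\pi\mathbb{Z})^m$ with variable $t$, $x\in\mathbb{R}^n$. For $\sigma>1$, $\mathcal{G}^\sigma(\mathbb{T}^m)$ is the space of smooth $\varphi$ on $\mathbb{T}^m$ with $\sup_t|\partial^\gamma\varphi(t)|\le Ch^{|\gamma|}(\gamma!)^\sigma$ for all $\gamma$, some $C,h>0$. $a(t)=\sum_{r=1}^m a_r(t)\mathrm{d}t_r$ is a closed $1$-form with real-valued coefficients in $\mathcal{G}^\sigma(\mathbb{T}^m)$ for some $\sigma>1$. $P(x,D_x)=\sum_{|\alpha|+|\beta|\le M}c_{\alpha,\beta}x^\beta\partial_x^\alpha$ ($c_{\alpha,\beta}\in\mathbb{C}$, $M\ge2$) is normal and globally elliptic ($\sum_{|\alpha|+|\beta|=M}c_{\alpha,\beta}x^\beta\xi^\alpha\ne0$ for $(x,\xi)\ne0$); it has discrete real spectrum $\{\lambda_j\}_{j\in\mathbb{N}}$, $|\lambda_j|\to\infty$, with eigenfunctions $\varphi_j\in\mathcal{S}^{1/2}_{1/2}(\mathbb{R}^n)$ forming an orthonormal basis of $L^2(\mathbb{R}^n)$.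 Fix $\mu\ge1/2$. For $\sigma>1,C>0$, $\mathcal{S}_{\sigma,\mu,C}$ is the Banach space of smooth $u$ on $\mathbb{T}^m\times\mathbb{R}^n$ with $\sup_{\alpha,\beta,\gamma}C^{-|\alpha+\beta|-|\gamma|}\gamma!^{-\sigma}(\alpha!\beta!)^{-\mu}\sup_{(t,x)}|x^\alpha\partial_x^\beta\partial_t^\gamma u|<\infty$; $\mathscr{F}_\mu=\bigcup_{\sigma>1}\bigcup_{C>0}\mathcal{S}_{\sigma,\mu,C}$ with inductive limit topology, $\mathscr{F}'_\mu$ its strong dual. $\mathscr{F}_{\mu,p}$ ($\mathscr{F}'_{\mu,p}$) is the space of $p$-forms $\sum_{|K|=p}u_K\mathrm{d}t_K$ in $\mathrm{d}t$ only with coefficients in $\mathscr{F}_\mu$ ($\mathscr{F}'_\mu$). $P$ acts on the coefficients, $\mathrm{d}_t$ is the exterior derivative in $t$. Global hypoellipticity of $\mathbb{L}^p$ means: $u\in\mathscr{F}'_{\mu,p}$ and $\mathbb{L}^pu\in\mathscr{F}_{\mu,p+1}$ imply $u\in\mathscr{F}_{\mu,p}$. *)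

theory Defs
  imports "HOL-Analysis.Analysis"
begin

definition pd :: "'a::euclidean_space \<Rightarrow> ('a \<Rightarrow> 'b::real_normed_vector) \<Rightarrow> 'a \<Rightarrow> 'b" where
  "pd v f y = vector_derivative (\<lambda>s::real. f (y + s *\<^sub>R v)) (at 0)"

definition pds :: "'a::euclidean_space list \<Rightarrow> ('a \<Rightarrow> 'b::real_normed_vector) \<Rightarrow> 'a \<Rightarrow> 'b" where
  "pds vs f = foldr pd vs f"

definition smooth :: "('a::euclidean_space \<Rightarrow> 'b::real_normed_vector) \<Rightarrow> bool" where
  "smooth f \<longleftrightarrow> (\<forall>vs. set vs \<subseteq> Basis \<longrightarrow> (\<forall>y. pds vs f differentiable (at y)))"

definition idx_list :: "('k::{finite,linorder} \<Rightarrow> nat) \<Rightarrow> 'k list" where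
  "idx_list \<alpha> = concat (map (\<lambda>i. replicate (\<alpha> i) i) (sorted_list_of_set (UNIV :: 'k set)))"

definition mabs :: "('k::finite \<Rightarrow> nat) \<Rightarrow> nat" where
  "mabs \<alpha> = (\<Sum>i\<in>UNIV. \<alpha> i)"

definition mfact :: "('k::finite \<Rightarrow> nat) \<Rightarrow> real" where
  "mfact \<alpha> = (\<Prod>i\<in>UNIV. fact (\<alpha> i))"

definition mpow :: "(real, 'k::finite) vec \<Rightarrow> ('k \<Rightarrow> nat) \<Rightarrow> real" where
  "mpow x \<alpha> = (\<Prod>i\<in>UNIV. (x $ i) ^ \<alpha> i)"

definition Dk :: "('k::{finite,linorder} \<Rightarrow> nat) \<Rightarrow> ((real, 'k) vec \<Rightarrow> 'b::real_normed_vector) \<Rightarrow> (real, 'k) vec \<Rightarrow> 'b" where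
  "Dk \<gamma> f = pds (map (\<lambda>i. axis i (1::real)) (idx_list \<gamma>)) f"

definition dirs_t :: "('m::{finite,linorder} \<Rightarrow> nat) \<Rightarrow> ((real, 'm) vec \<times> (real, 'n::{finite,linorder}) vec) list" where
  "dirs_t \<gamma> = map (\<lambda>r. (axis r (1::real), 0)) (idx_list \<gamma>)"

definition dirs_x :: "('n::{finite,linorder} \<Rightarrow> nat) \<Rightarrow> ((real, 'm::{finite,linorder}) vec \<times> (real, 'n) vec) list" where
  "dirs_x \<beta> = map (\<lambda>i. (0, axis i (1::real))) (idx_list \<beta>)"

text \<open>Functions on \<open>\<real>^m\<close> that are \<open>2\<pi>\<close>-periodic in each variable = functions on \<open>\<T>^m\<close>.\<close>
definition gevrey_torus :: "real \<Rightarrow> ((real, 'm::{finite,linorder}) vec \<Rightarrow> real) \<Rightarrow> bool" where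
  "gevrey_torus \<sigma> f \<longleftrightarrow> smooth f \<and>
     (\<forall>r t. f (t + (2*pi) *\<^sub>R axis r 1) = f t) \<and>
     (\<exists>C h. C > 0 \<and> h > 0 \<and>
        (\<forall>\<gamma> t. \<bar>Dk \<gamma> f t\<bar> \<le> C * h ^ mabs \<gamma> * mfact \<gamma> powr \<sigma>))"

text \<open>A real 1-form \<open>a = \<Sum>_r a_r dt_r\<close> is closed.\<close>
definition closed_1form :: "('m::{finite,linorder} \<Rightarrow> (real, 'm) vec \<Rightarrow> real) \<Rightarrow> bool" where
  "closed_1form a \<longleftrightarrow> (\<forall>r s t. pd (axis s 1) (a r) t = pd (axis r 1) (a s) t)"

text \<open>Coefficients \<open>c \<alpha> \<beta>\<close> of \<open>P = \<Sum>_{|\<alpha>|+|\<beta>|\<le>M} c_{\<alpha>\<beta>} x^\<beta> \<partial>_x^\<alpha>\<close>.\<close>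
definition midx_le :: "nat \<Rightarrow> (('n::finite \<Rightarrow> nat) \<times> ('n \<Rightarrow> nat)) set" where
  "midx_le M = {(\<alpha>, \<beta>). mabs \<alpha> + mabs \<beta> \<le> M}"

definition midx_eq :: "nat \<Rightarrow> (('n::finite \<Rightarrow> nat) \<times> ('n \<Rightarrow> nat)) set" where
  "midx_eq M = {(\<alpha>, \<beta>). mabs \<alpha> + mabs \<beta> = M}"

definition Pop :: "(('n::{finite,linorder} \<Rightarrow> nat) \<Rightarrow> ('n \<Rightarrow> nat) \<Rightarrow> complex) \<Rightarrow> nat
                    \<Rightarrow> ((real, 'n) vec \<Rightarrow> complex) \<Rightarrow> (real, 'n) vec \<Rightarrow> complex" where
  "Pop c M f x = (\<Sum>(\<alpha>, \<beta>)\<in>midx_le M. c \<alpha> \<beta> * (complex_of_real (mpow x \<beta>) * Dk \<alpha> f x))"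

definition Padj :: "(('n::{finite,linorder} \<Rightarrow> nat) \<Rightarrow> ('n \<Rightarrow> nat) \<Rightarrow> complex) \<Rightarrow> nat
                    \<Rightarrow> ((real, 'n) vec \<Rightarrow> complex) \<Rightarrow> (real, 'n) vec \<Rightarrow> complex" where
  "Padj c M f x = (\<Sum>(\<alpha>, \<beta>)\<in>midx_le M.
      cnj (c \<alpha> \<beta>) * (-1) ^ mabs \<alpha> * Dk \<alpha> (\<lambda>z. complex_of_real (mpow z \<beta>) * f z) x)"

text \<open>Formal transpose of P (for the bilinear pairing).\<close>
definition Ptr :: "(('n::{finite,linorder} \<Rightarrow> nat) \<Rightarrow> ('n \<Rightarrow> nat) \<Rightarrow> complex) \<Rightarrow> nat
                    \<Rightarrow> ((real, 'n) vec \<Rightarrow> complex) \<Rightarrow> (real, 'n) vec \<Rightarrow> complex" where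
  "Ptr c M f x = (\<Sum>(\<alpha>, \<beta>)\<in>midx_le M.
      c \<alpha> \<beta> * (-1) ^ mabs \<alpha> * Dk \<alpha> (\<lambda>z. complex_of_real (mpow z \<beta>) * f z) x)"

text \<open>Global ellipticity of order M (principal symbol nonvanishing off the origin).\<close>
definition globally_elliptic :: "(('n::finite \<Rightarrow> nat) \<Rightarrow> ('n \<Rightarrow> nat) \<Rightarrow> complex) \<Rightarrow> nat \<Rightarrow> bool" where
  "globally_elliptic c M \<longleftrightarrow>
     (\<forall>x \<xi> :: (real, 'n) vec. (x, \<xi>) \<noteq> 0 \<longrightarrow>
        (\<Sum>(\<alpha>, \<beta>)\<in>midx_eq M. c \<alpha> \<beta> * complex_of_real (mpow x \<beta> * mpow \<xi> \<alpha>)) \<noteq> 0)"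

definition normal_op :: "(('n::{finite,linorder} \<Rightarrow> nat) \<Rightarrow> ('n \<Rightarrow> nat) \<Rightarrow> complex) \<Rightarrow> nat \<Rightarrow> bool" where
  "normal_op c M \<longleftrightarrow>
     (\<forall>f :: (real, 'n) vec \<Rightarrow> complex. smooth f \<longrightarrow> Pop c M (Padj c M f) = Padj c M (Pop c M f))"

definition GS_half :: "((real, 'n::{finite,linorder}) vec \<Rightarrow> complex) \<Rightarrow> bool" where
  "GS_half f \<longleftrightarrow> smooth f \<and> (\<exists>C>0. \<forall>\<alpha> \<beta> x.
      \<bar>mpow x \<alpha>\<bar> * norm (Dk \<beta> f x) \<le> C ^ (mabs \<alpha> + mabs \<beta> + 1) * (mfact \<alpha> * mfact \<beta>) powr (1/2))"

definition real_spectral_basis :: "(('n::{finite,linorder} \<Rightarrow> nat) \<Rightarrow> ('n \<Rightarrow> nat) \<Rightarrow> complex) \<Rightarrow> nat \<Rightarrow> bool" where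
  "real_spectral_basis c M \<longleftrightarrow>
     (\<exists>(lam::nat \<Rightarrow> real) (\<phi>::nat \<Rightarrow> (real, 'n) vec \<Rightarrow> complex).
        (\<forall>j. GS_half (\<phi> j) \<and> Pop c M (\<phi> j) = (\<lambda>x. complex_of_real (lam j) * \<phi> j x)) \<and>
        filterlim (\<lambda>j. \<bar>lam j\<bar>) at_top sequentially \<and>
        (\<forall>j k. integrable lborel (\<lambda>x. \<phi> j x * cnj (\<phi> k x)) \<and>
               (LINT x|lborel. \<phi> j x * cnj (\<phi> k x)) = (if j = k then 1 else 0)) \<and>
        (\<forall>f :: (real, 'n) vec \<Rightarrow> complex. f \<in> borel_measurable lborel \<and>
               integrable lborel (\<lambda>x. (norm (f x))\<^sup>2) \<and>
               (\<forall>j. (LINT x|lborel. f x * cnj (\<phi> j x)) = 0)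
               \<longrightarrow> (AE x in lborel. f x = 0)))"

type_synonym ('m, 'n) fn = "(real, 'm) vec \<times> (real, 'n) vec \<Rightarrow> complex"

definition t_periodic :: "('m::finite, 'n::finite) fn \<Rightarrow> bool" where
  "t_periodic u \<longleftrightarrow> (\<forall>r t x. u (t + (2*pi) *\<^sub>R axis r 1, x) = u (t, x))"

text \<open>\<open>B\<close> bounds the \<open>\<S>_{\<sigma>,\<mu>,C}\<close> norm of \<open>u\<close> (the norm is the least such \<open>B\<close>).\<close>
definition S_bound :: "real \<Rightarrow> real \<Rightarrow> real \<Rightarrow> ('m::{finite,linorder}, 'n::{finite,linorder}) fn \<Rightarrow> real \<Rightarrow> bool" where
  "S_bound \<sigma> \<mu> C u B \<longleftrightarrow>
     (\<forall>(\<alpha>::'n \<Rightarrow> nat) (\<beta>::'n \<Rightarrow> nat) (\<gamma>::'m \<Rightarrow> nat) t x.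
        \<bar>mpow x \<alpha>\<bar> * norm (pds (dirs_x \<beta> @ dirs_t \<gamma>) u (t, x))
          \<le> B * C ^ (mabs \<alpha> + mabs \<beta> + mabs \<gamma>) * mfact \<gamma> powr \<sigma> * (mfact \<alpha> * mfact \<beta>) powr \<mu>)"

definition S_space :: "real \<Rightarrow> real \<Rightarrow> real \<Rightarrow> ('m::{finite,linorder}, 'n::{finite,linorder}) fn set" where
  "S_space \<sigma> \<mu> C = {u. smooth u \<and> t_periodic u \<and> (\<exists>B. S_bound \<sigma> \<mu> C u B)}"

definition F_space :: "real \<Rightarrow> ('m::{finite,linorder}, 'n::{finite,linorder}) fn set" where
  "F_space \<mu> = (\<Union>\<sigma>\<in>{1<..}. \<Union>C\<in>{0<..}. S_space \<sigma> \<mu> C)"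

text \<open>Elements of \<open>\<F>'_\<mu>\<close>: linear functionals on \<open>\<F>_\<mu>\<close> continuous for the inductive limit
  topology, i.e. continuous on each Banach space \<open>\<S>_{\<sigma>,\<mu>,C}\<close>.\<close>
definition F_dual :: "real \<Rightarrow> (('m::{finite,linorder}, 'n::{finite,linorder}) fn \<Rightarrow> complex) \<Rightarrow> bool" where
  "F_dual \<mu> T \<longleftrightarrow>
     (\<forall>\<phi>\<in>F_space \<mu>. \<forall>\<psi>\<in>F_space \<mu>. \<forall>a b.
        T (\<lambda>y. a * \<phi> y + b * \<psi> y) = a * T \<phi> + b * T \<psi>) \<and>
     (\<forall>\<sigma>>1. \<forall>C>0. \<exists>K. \<forall>\<phi> B. \<phi> \<in> S_space \<sigma> \<mu> C \<longrightarrow> S_bound \<sigma> \<mu> C \<phi> B \<longrightarrow> norm (T \<phi>) \<le> K * B)"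

text \<open>Embedding of functions into distributions: \<open>\<langle>f,\<phi>\<rangle> = \<integral>_{\<T>^m\<times>\<real>^n} f \<phi>\<close>.\<close>
definition pairing :: "('m::finite, 'n::finite) fn \<Rightarrow> ('m, 'n) fn \<Rightarrow> complex" where
  "pairing f \<phi> = (LINT y:(cbox (0::(real, 'm) vec) (\<chi> r. 2*pi) \<times> UNIV)|lborel. f y * \<phi> y)"

definition represented_by_F :: "real \<Rightarrow> (('m::{finite,linorder}, 'n::{finite,linorder}) fn \<Rightarrow> complex) \<Rightarrow> bool" where
  "represented_by_F \<mu> T \<longleftrightarrow> (\<exists>f\<in>F_space \<mu>. \<forall>\<phi>\<in>F_space \<mu>. T \<phi> = pairing f \<phi>)"

text \<open>A p-form \<open>\<Sum>_{|K|=p} u_K dt_K\<close> of distributions is represented by \<open>K \<mapsto> u_K\<close>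
  (only sets \<open>K\<close> with \<open>card K = p\<close> matter).\<close>
type_synonym ('m, 'n) dform = "'m set \<Rightarrow> (('m, 'n) fn \<Rightarrow> complex)"

definition F_dual_form :: "real \<Rightarrow> nat \<Rightarrow> ('m::{finite,linorder}, 'n::{finite,linorder}) dform \<Rightarrow> bool" where
  "F_dual_form \<mu> p u \<longleftrightarrow> (\<forall>K. card K = p \<longrightarrow> F_dual \<mu> (u K))"

definition F_form :: "real \<Rightarrow> nat \<Rightarrow> ('m::{finite,linorder}, 'n::{finite,linorder}) dform \<Rightarrow> bool" where
  "F_form \<mu> p u \<longleftrightarrow> (\<forall>K. card K = p \<longrightarrow> represented_by_F \<mu> (u K))"

text \<open>Sign of \<open>dt_r \<and> dt_{J-{r}}\<close> relative to \<open>dt_J\<close> (increasing order).\<close>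
definition ins_sign :: "'m::linorder \<Rightarrow> 'm set \<Rightarrow> complex" where
  "ins_sign r J = (-1) ^ card {s\<in>J. s < r}"

definition Ptr_tx :: "(('n::{finite,linorder} \<Rightarrow> nat) \<Rightarrow> ('n \<Rightarrow> nat) \<Rightarrow> complex) \<Rightarrow> nat
                       \<Rightarrow> ('m::finite, 'n) fn \<Rightarrow> ('m, 'n) fn" where
  "Ptr_tx c M \<phi> y = Ptr c M (\<lambda>x. \<phi> (fst y, x)) (snd y)"

text \<open>\<open>\<LL>^p u = d_t u + i a(t) \<and> P u\<close> on forms of distributions, defined by transposition:
  \<open>\<langle>\<partial>_{t_r} T,\<phi>\<rangle> = -T(\<partial>_{t_r}\<phi>)\<close>, \<open>\<langle>a_r P T,\<phi>\<rangle> = T(P^t(a_r\<phi>))\<close>.\<close>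
definition Lop :: "(('n::{finite,linorder} \<Rightarrow> nat) \<Rightarrow> ('n \<Rightarrow> nat) \<Rightarrow> complex) \<Rightarrow> nat
                   \<Rightarrow> ('m::{finite,linorder} \<Rightarrow> (real, 'm) vec \<Rightarrow> real)
                   \<Rightarrow> ('m, 'n) dform \<Rightarrow> ('m, 'n) dform" where
  "Lop c M a u J = (\<lambda>\<phi>. \<Sum>r\<in>J. ins_sign r J *
      (- u (J - {r}) (pd (axis r (1::real), 0) \<phi>)
       + \<i> * u (J - {r}) (Ptr_tx c M (\<lambda>y. complex_of_real (a r (fst y)) * \<phi> y))))"

end

theory Submission
  imports Defs "HOL-Library.Multiset"
begin

lemma pds_Nil[simp]: "pds [] f = f" by (simp add: pds_def)
lemma pds_Cons[simp]: "pds (v#vs) f = pd v (pds vs f)" by (simp add: pds_def)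
lemma pds_append: "pds (xs@ys) f = pds xs (pds ys f)" by (simp add: pds_def)

lemma line_deriv:
  fixes F :: "'a::euclidean_space \<Rightarrow> 'b::real_normed_vector"
  assumes "(F has_derivative F') (at (w + s *\<^sub>R v))"
  shows "((\<lambda>\<sigma>. F (w + \<sigma> *\<^sub>R v)) has_vector_derivative F' v) (at s within S)"
proof -
  have l: "((\<lambda>\<sigma>. w + \<sigma> *\<^sub>R v) has_derivative (\<lambda>h. h *\<^sub>R v)) (at s within S)"
    by (auto intro!: derivative_eq_intros)
  have "((\<lambda>\<sigma>. F (w + \<sigma> *\<^sub>R v)) has_derivative (\<lambda>h. F' (h *\<^sub>R v))) (at s within S)"
    by (rule has_derivative_compose[OF l assms])
  moreover have "(\<lambda>h. F' (h *\<^sub>R v)) = (\<lambda>h. h *\<^sub>R F' v)"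
    using assms by (auto simp: has_derivative_def linear_scale intro!: ext linear_cmul
      bounded_linear.linear)
  ultimately show ?thesis by (simp add: has_vector_derivative_def)
qed

lemma pd_eq_frechet:
  fixes F :: "'a::euclidean_space \<Rightarrow> 'b::real_normed_vector"
  assumes "F differentiable (at z)"
  shows "pd v F z = frechet_derivative F (at z) v"
proof -
  have "(F has_derivative frechet_derivative F (at z)) (at (z + 0 *\<^sub>R v))"
    using assms frechet_derivative_works by auto
  from line_deriv[OF this, of UNIV] show ?thesis
    unfolding pd_def by (intro vector_derivative_at) simp
qed

lemma pd_line_has:
  fixes F :: "'a::euclidean_space \<Rightarrow> 'b::real_normed_vector"
  assumes "F differentiable (at (y + s *\<^sub>R v))"
  shows "((\<lambda>s. F (y + s *\<^sub>R v)) has_vector_derivative pd v F (y + s *\<^sub>R v)) (at s within S)"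
proof -
  have "(F has_derivative frechet_derivative F (at (y + s *\<^sub>R v))) (at (y + s *\<^sub>R v))"
    using assms frechet_derivative_works by auto
  from line_deriv[OF this] show ?thesis using pd_eq_frechet[OF assms] by simp
qed

lemma pd_via:
  assumes "((\<lambda>s. F (y + s *\<^sub>R v)) has_vector_derivative D) (at 0)"
  shows "pd v F y = D"
  unfolding pd_def using assms by (rule vector_derivative_at)

lemma pd_has0:
  fixes F :: "'a::euclidean_space \<Rightarrow> 'b::real_normed_vector"
  assumes "F differentiable (at y)"
  shows "((\<lambda>s. F (y + s *\<^sub>R v)) has_vector_derivative pd v F y) (at 0)"
  using pd_line_has[of F y 0 v UNIV] assms by simp

lemma pd_const[simp]: "pd v (\<lambda>_. c) = (\<lambda>_. 0)"
  by (rule ext, rule pd_via) (auto intro: derivative_eq_intros)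

lemma pd_lin:
  fixes F G :: "'a::euclidean_space \<Rightarrow> complex"
  assumes "F differentiable (at y)" "G differentiable (at y)"
  shows "pd v (\<lambda>y. a * F y + b * G y) y = a * pd v F y + b * pd v G y"
  by (rule pd_via) (use has_vector_derivative_add[OF has_vector_derivative_mult_right[OF pd_has0[OF assms(1)]]
        has_vector_derivative_mult_right[OF pd_has0[OF assms(2)]]] in simp)

lemma pd_mult:
  fixes F G :: "'a::euclidean_space \<Rightarrow> complex"
  assumes "F differentiable (at y)" "G differentiable (at y)"
  shows "pd v (\<lambda>y. F y * G y) y = pd v F y * G y + F y * pd v G y"
proof (rule pd_via)
  show "((\<lambda>s. F (y + s *\<^sub>R v) * G (y + s *\<^sub>R v)) has_vector_derivative pd v F y * G y + F y * pd v G y) (at 0)"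
    using has_vector_derivative_mult[OF pd_has0[OF assms(1)] pd_has0[OF assms(2)]]
    by (simp add: algebra_simps)
qed

lemma pd_sum:
  fixes f :: "'i \<Rightarrow> 'a::euclidean_space \<Rightarrow> complex"
  assumes "\<And>i. i \<in> A \<Longrightarrow> f i differentiable (at y)"
  shows "pd v (\<lambda>y. \<Sum>i\<in>A. f i y) y = (\<Sum>i\<in>A. pd v (f i) y)"
proof (cases "finite A")
  case True
  show ?thesis
    by (rule pd_via, rule has_vector_derivative_sum) (use assms in \<open>auto intro: pd_has0\<close>)
next
  case False then show ?thesis by simp
qed

lemma ftc_line:
  fixes F :: "'a::euclidean_space \<Rightarrow> complex"
  assumes dF: "\<And>y. F differentiable (at y)" and t: "0 \<le> t"
  shows "F (y + t *\<^sub>R v) - F y = integral {0..t} (\<lambda>\<tau>. pd v F (y + \<tau> *\<^sub>R v))"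
proof -
  have "((\<lambda>\<tau>. pd v F (y + \<tau> *\<^sub>R v)) has_integral (F (y + t *\<^sub>R v) - F (y + 0 *\<^sub>R v))) {0..t}"
    by (rule fundamental_theorem_of_calculus[OF t]) (intro pd_line_has dF)
  then show ?thesis by (simp add: integral_unique)
qed

lemma schwarz:
  fixes F :: "'a::euclidean_space \<Rightarrow> complex"
  assumes dF: "\<And>y. F differentiable (at y)"
   and dU: "\<And>y. pd u F differentiable (at y)"
   and dV: "\<And>y. pd v F differentiable (at y)"
   and cont: "continuous_on UNIV (pd u (pd v F))"
  shows "pd v (pd u F) x = pd u (pd v F) x"
proof -
  define G where "G = pd v F"
  define H where "H = pd u F"
  define D1 where "D1 = pd u G"
  have contG: "continuous_on UNIV G"
    using dV unfolding G_def by (meson continuous_at_imp_continuous_on differentiable_imp_continuous_within)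
  have contD1: "continuous_on UNIV D1" using cont unfolding D1_def G_def .
  define \<Phi> where "\<Phi> t = H (x + t *\<^sub>R v) - H x" for t
  define \<Psi> where "\<Psi> t = integral {0..t} (\<lambda>\<tau>. D1 (x + \<tau> *\<^sub>R v))" for t
  have eq: "\<Phi> t = \<Psi> t" if t: "t \<in> {0..1}" for t
  proof -
    define W where "W s = F (x + s *\<^sub>R u + t *\<^sub>R v) - F (x + s *\<^sub>R u)" for s
    have "((\<lambda>s. F ((x + t *\<^sub>R v) + s *\<^sub>R u)) has_vector_derivative H (x + t *\<^sub>R v)) (at 0)"
      using pd_has0[OF dF] unfolding H_def .
    moreover have "((\<lambda>s. F (x + s *\<^sub>R u)) has_vector_derivative H x) (at 0)"
      using pd_has0[OF dF] unfolding H_def .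
    ultimately have "(W has_vector_derivative \<Phi> t) (at 0)"
      unfolding W_def \<Phi>_def using has_vector_derivative_diff by (auto simp: algebra_simps)
    moreover have "W = (\<lambda>s. integral (cbox 0 t) (\<lambda>\<tau>. G (x + s *\<^sub>R u + \<tau> *\<^sub>R v)))"
    proof
      fix s
      have "W s = F ((x + s *\<^sub>R u) + t *\<^sub>R v) - F (x + s *\<^sub>R u)" by (simp add: W_def)
      also have "\<dots> = integral {0..t} (\<lambda>\<tau>. G (x + s *\<^sub>R u + \<tau> *\<^sub>R v))"
        unfolding G_def by (rule ftc_line[OF dF]) (use t in auto)
      finally show "W s = integral (cbox 0 t) (\<lambda>\<tau>. G (x + s *\<^sub>R u + \<tau> *\<^sub>R v))" by simp
    qed
    moreover have "((\<lambda>s. integral (cbox 0 t) (\<lambda>\<tau>. G (x + s *\<^sub>R u + \<tau> *\<^sub>R v))) has_vector_derivative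
        integral (cbox 0 t) (\<lambda>\<tau>. D1 (x + 0 *\<^sub>R u + \<tau> *\<^sub>R v))) (at 0 within UNIV)"
    proof (rule leibniz_rule_vector_derivative)
      fix s \<tau> :: real
      have "((\<lambda>s. G ((x + \<tau> *\<^sub>R v) + s *\<^sub>R u)) has_vector_derivative D1 ((x + \<tau> *\<^sub>R v) + s *\<^sub>R u)) (at s within UNIV)"
        unfolding D1_def by (rule pd_line_has) (use dV in \<open>simp add: G_def\<close>)
      then show "((\<lambda>s. G (x + s *\<^sub>R u + \<tau> *\<^sub>R v)) has_vector_derivative D1 (x + s *\<^sub>R u + \<tau> *\<^sub>R v)) (at s within UNIV)"
        by (simp add: algebra_simps)
    next
      fix s :: real
      show "(\<lambda>\<tau>. G (x + s *\<^sub>R u + \<tau> *\<^sub>R v)) integrable_on cbox 0 t"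
      proof (rule integrable_continuous)
        have "continuous_on UNIV (\<lambda>\<tau>::real. x + s *\<^sub>R u + \<tau> *\<^sub>R v)" by (intro continuous_intros)
        from continuous_on_compose2[OF contG this subset_UNIV] show "continuous_on (cbox 0 t) (\<lambda>\<tau>. G (x + s *\<^sub>R u + \<tau> *\<^sub>R v))"
          by (rule continuous_on_subset) (rule subset_UNIV)
      qed
    next
      show "continuous_on (UNIV \<times> cbox 0 t) (\<lambda>(s, \<tau>). D1 (x + s *\<^sub>R u + \<tau> *\<^sub>R v))"
      proof -
        have "continuous_on UNIV (\<lambda>p::real\<times>real. x + fst p *\<^sub>R u + snd p *\<^sub>R v)"
          by (intro continuous_intros)
        from continuous_on_compose2[OF contD1 this subset_UNIV] have "continuous_on UNIV (\<lambda>p::real\<times>real. D1 (x + fst p *\<^sub>R u + snd p *\<^sub>R v))"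
          .
        then show ?thesis unfolding case_prod_beta' by (rule continuous_on_subset) (rule subset_UNIV)
      qed
    qed auto
    ultimately have "(W has_vector_derivative \<Psi> t) (at 0)"
      by (simp add: \<Psi>_def)
    with \<open>(W has_vector_derivative \<Phi> t) (at 0)\<close> show ?thesis
      using vector_derivative_unique_at by blast
  qed
  have d1: "(\<Phi> has_vector_derivative pd v H x) (at 0 within cbox 0 1)"
  proof -
    have "((\<lambda>t. H (x + t *\<^sub>R v)) has_vector_derivative pd v H x) (at 0 within cbox 0 1)"
      using pd_line_has[of H x 0 v] dU unfolding H_def by simp
    then show ?thesis unfolding \<Phi>_def
      by (rule has_vector_derivative_diff[OF _ has_vector_derivative_const, THEN has_vector_derivative_eq_rhs]) simp
  qed
  have "(\<Psi> has_vector_derivative D1 (x + 0 *\<^sub>R v)) (at 0 within {0..1})"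
    unfolding \<Psi>_def
  proof (rule integral_has_vector_derivative)
    have "continuous_on UNIV (\<lambda>\<tau>::real. x + \<tau> *\<^sub>R v)" by (intro continuous_intros)
    from continuous_on_compose2[OF contD1 this subset_UNIV] show "continuous_on {0..1} (\<lambda>\<tau>. D1 (x + \<tau> *\<^sub>R v))"
      by (rule continuous_on_subset) (rule subset_UNIV)
  qed simp
  then have psi: "(\<Psi> has_vector_derivative D1 x) (at 0 within cbox 0 1)"
    by simp
  have phi: "(\<Phi> has_vector_derivative D1 x) (at 0 within cbox 0 1)"
    by (rule has_vector_derivative_transform_within[OF psi, of 1]) (auto simp: eq)
  have "pd v H x = D1 x"
    by (rule vector_derivative_unique_within_closed_interval[OF _ _ d1 phi]) auto
  then show ?thesis by (simp add: H_def D1_def G_def)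
qed

section \<open>Smoothness algebra\<close>

lemma smooth_diff: "smooth F \<Longrightarrow> F differentiable (at y)"
  unfolding smooth_def by (metis empty_subsetI list.set(1) pds_Nil)

lemma smooth_pds: "smooth F \<Longrightarrow> set ws \<subseteq> Basis \<Longrightarrow> smooth (pds ws F)"
  unfolding smooth_def by (metis pds_append set_append Un_subset_iff)

lemma smooth_pd: "smooth F \<Longrightarrow> v \<in> Basis \<Longrightarrow> smooth (pd v F)"
  using smooth_pds[of F "[v]"] by simp

lemma pds_diff: "smooth F \<Longrightarrow> set ws \<subseteq> Basis \<Longrightarrow> pds ws F differentiable (at y)"
  using smooth_def by blast

lemma pds_lin:
  fixes F G :: "'a::euclidean_space \<Rightarrow> complex"
  assumes "smooth F" "smooth G" "set vs \<subseteq> Basis"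
  shows "pds vs (\<lambda>y. a * F y + b * G y) = (\<lambda>y. a * pds vs F y + b * pds vs G y)"
  using assms(3)
proof (induction vs)
  case Nil then show ?case by simp
next
  case (Cons v vs)
  then have "set vs \<subseteq> Basis" by simp
  then show ?case using Cons
    by (auto intro!: ext pd_lin pds_diff assms(1,2))
qed

lemma smooth_lin:
  fixes F G :: "'a::euclidean_space \<Rightarrow> complex"
  assumes "smooth F" "smooth G"
  shows "smooth (\<lambda>y. a * F y + b * G y)"
  unfolding smooth_def
proof (intro allI impI)
  fix vs :: "'a list" and y assume vs: "set vs \<subseteq> Basis"
  show "pds vs (\<lambda>y. a * F y + b * G y) differentiable at y"
    unfolding pds_lin[OF assms vs]
    by (intro differentiable_add differentiable_mult differentiable_const pds_diff assms vs)
qed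

lemma pds_const: "pds vs (\<lambda>_. c) = (\<lambda>_. if vs = [] then c else 0)"
  by (induction vs) auto

lemma smooth_const: "smooth (\<lambda>_. c)"
  unfolding smooth_def by (simp add: pds_const)

lemma smooth_scale:
  fixes F :: "'a::euclidean_space \<Rightarrow> complex"
  assumes "smooth F" shows "smooth (\<lambda>y. a * F y)"
  using smooth_lin[OF assms smooth_const, of a 0] by simp

lemma smooth_add:
  fixes F G :: "'a::euclidean_space \<Rightarrow> complex"
  assumes "smooth F" "smooth G" shows "smooth (\<lambda>y. F y + G y)"
  using smooth_lin[OF assms, of 1 1] by simp

lemma pds_add:
  fixes F G :: "'a::euclidean_space \<Rightarrow> complex"
  assumes "smooth F" "smooth G" "set vs \<subseteq> Basis"
  shows "pds vs (\<lambda>y. F y + G y) = (\<lambda>y. pds vs F y + pds vs G y)"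
  using pds_lin[OF assms, of 1 1] by simp

lemma pds_scale:
  fixes F :: "'a::euclidean_space \<Rightarrow> complex"
  assumes "smooth F" "set vs \<subseteq> Basis"
  shows "pds vs (\<lambda>y. a * F y) = (\<lambda>y. a * pds vs F y)"
  using pds_lin[OF assms(1) smooth_const assms(2), of a 0] by simp

fun lb :: "'x list \<Rightarrow> ('x list \<times> 'x list) list" where
  "lb [] = [([],[])]"
| "lb (v#ws) = map (\<lambda>(a,b). (v#a, b)) (lb ws) @ map (\<lambda>(a,b). (a, v#b)) (lb ws)"

lemma lb_set: "(a,b) \<in> set (lb ix) \<Longrightarrow> set a \<subseteq> set ix \<and> set b \<subseteq> set ix"
  by (induction ix arbitrary: a b) (simp, fastforce)

lemma lb_sorted: "(a,b) \<in> set (lb ix) \<Longrightarrow> sorted ix \<Longrightarrow> sorted b"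
proof (induction ix arbitrary: a b)
  case Nil then show ?case by simp
next
  case (Cons v ws)
  from Cons.prems(1) obtain a' b' where ab: "(a',b') \<in> set (lb ws)" "b = b' \<or> b = v#b'"
    by auto
  have sb': "sorted b'" using Cons.IH[OF ab(1)] Cons.prems(2) by simp
  have "set b' \<subseteq> set ws" using lb_set[OF ab(1)] by simp
  then show ?case using ab(2) sb' Cons.prems(2) by force
qed

lemma differentiable_sum_list:
  fixes f :: "'k \<Rightarrow> 'a::euclidean_space \<Rightarrow> complex"
  assumes "\<And>k. k \<in> set xs \<Longrightarrow> f k differentiable (at y)"
  shows "(\<lambda>y. sum_list (map (\<lambda>k. f k y) xs)) differentiable (at y)"
  using assms by (induction xs) (auto intro!: differentiable_add)

lemma pd_sum_list:
  fixes f :: "'k \<Rightarrow> 'a::euclidean_space \<Rightarrow> complex"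
  assumes "\<And>k. k \<in> set xs \<Longrightarrow> f k differentiable (at y)"
  shows "pd v (\<lambda>y. sum_list (map (\<lambda>k. f k y) xs)) y = sum_list (map (\<lambda>k. pd v (f k) y) xs)"
  using assms
proof (induction xs)
  case Nil then show ?case by simp
next
  case (Cons k xs)
  have "pd v (\<lambda>y. 1 * f k y + 1 * sum_list (map (\<lambda>k. f k y) xs)) y
      = 1 * pd v (f k) y + 1 * pd v (\<lambda>y. sum_list (map (\<lambda>k. f k y) xs)) y"
    by (rule pd_lin) (use Cons.prems in \<open>auto intro!: differentiable_sum_list\<close>)
  then show ?case using Cons by simp
qed

lemma leibniz:
  fixes F G :: "'a::euclidean_space \<Rightarrow> complex"
  assumes F: "smooth F" and G: "smooth G" and B: "set (map g ix) \<subseteq> Basis"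
  shows "pds (map g ix) (\<lambda>y. F y * G y)
       = (\<lambda>y. sum_list (map (\<lambda>p. pds (map g (fst p)) F y * pds (map g (snd p)) G y) (lb ix)))"
  using B
proof (induction ix)
  case Nil then show ?case by simp
next
  case (Cons i ix)
  then have B': "set (map g ix) \<subseteq> Basis" and gi: "g i \<in> Basis" by auto
  have sub: "set (map g (fst p)) \<subseteq> Basis" "set (map g (snd p)) \<subseteq> Basis" if "p \<in> set (lb ix)" for p
    using lb_set[of "fst p" "snd p" ix] that B' by auto
  show ?case
  proof
    fix y
    have "pds (map g (i#ix)) (\<lambda>y. F y * G y) y
        = pd (g i) (\<lambda>y. sum_list (map (\<lambda>p. pds (map g (fst p)) F y * pds (map g (snd p)) G y) (lb ix))) y"
      using Cons.IH[OF B'] by simp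
    also have "\<dots> = sum_list (map (\<lambda>p. pd (g i) (\<lambda>y. pds (map g (fst p)) F y * pds (map g (snd p)) G y) y) (lb ix))"
      by (rule pd_sum_list) (auto intro!: differentiable_mult pds_diff F G dest: sub)
    also have "\<dots> = sum_list (map (\<lambda>p. pds (map g (i#fst p)) F y * pds (map g (snd p)) G y
                                        + pds (map g (fst p)) F y * pds (map g (i#snd p)) G y) (lb ix))"
      by (intro arg_cong[where f=sum_list] map_cong refl)
         (auto intro!: pd_mult pds_diff F G dest: sub)
    also have "\<dots> = sum_list (map (\<lambda>p. pds (map g (fst p)) F y * pds (map g (snd p)) G y) (lb (i#ix)))"
      by (simp add: sum_list_addf o_def case_prod_beta)
    finally show "pds (map g (i#ix)) (\<lambda>y. F y * G y) y = sum_list (map (\<lambda>p. pds (map g (fst p)) F y * pds (map g (snd p)) G y) (lb (i#ix)))" .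
  qed
qed

lemma smooth_mult:
  fixes F G :: "'a::euclidean_space \<Rightarrow> complex"
  assumes F: "smooth F" and G: "smooth G"
  shows "smooth (\<lambda>y. F y * G y)"
  unfolding smooth_def
proof (intro allI impI)
  fix vs :: "'a list" and y assume vs: "set vs \<subseteq> Basis"
  have e: "pds vs (\<lambda>y. F y * G y) = (\<lambda>y. sum_list (map (\<lambda>p. pds (map id (fst p)) F y * pds (map id (snd p)) G y) (lb vs)))"
    using leibniz[OF F G, of id vs] vs by simp
  have sub: "set (fst p) \<subseteq> Basis" "set (snd p) \<subseteq> Basis" if "p \<in> set (lb vs)" for p
    using lb_set[of "fst p" "snd p" vs] that vs by auto
  show "pds vs (\<lambda>y. F y * G y) differentiable at y"
    unfolding e by (rule differentiable_sum_list) (auto intro!: differentiable_mult pds_diff F G dest: sub)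
qed

lemma smooth_sum:
  fixes f :: "'i \<Rightarrow> 'a::euclidean_space \<Rightarrow> complex"
  assumes "\<And>i. i \<in> A \<Longrightarrow> smooth (f i)"
  shows "smooth (\<lambda>y. \<Sum>i\<in>A. f i y)"
proof (cases "finite A")
  case True then show ?thesis using assms
    by (induction A rule: finite_induct) (auto intro: smooth_const smooth_add)
next
  case False then show ?thesis by (simp add: smooth_const)
qed

lemma pds_sum:
  fixes f :: "'i \<Rightarrow> 'a::euclidean_space \<Rightarrow> complex"
  assumes "\<And>i. i \<in> A \<Longrightarrow> smooth (f i)" "set vs \<subseteq> Basis"
  shows "pds vs (\<lambda>y. \<Sum>i\<in>A. f i y) = (\<lambda>y. \<Sum>i\<in>A. pds vs (f i) y)"
proof (cases "finite A")
  case True then show ?thesis using assms(1)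
  proof (induction A rule: finite_induct)
    case empty then show ?case using pds_scale[OF smooth_const assms(2), of 0 0] by simp
  next
    case (insert i A)
    have "pds vs (\<lambda>y. f i y + (\<Sum>i\<in>A. f i y)) = (\<lambda>y. pds vs (f i) y + pds vs (\<lambda>y. \<Sum>i\<in>A. f i y) y)"
      by (rule pds_add) (use insert assms(2) in \<open>auto intro!: smooth_sum\<close>)
    then show ?case using insert by simp
  qed
next
  case False
  then show ?thesis using pds_scale[OF smooth_const assms(2), of 0 0] by simp
qed

lemma schwarz_smooth:
  fixes F :: "'a::euclidean_space \<Rightarrow> complex"
  assumes F: "smooth F" and u: "u \<in> Basis" and v: "v \<in> Basis"
  shows "pd v (pd u F) = pd u (pd v F)"
proof
  fix x
  show "pd v (pd u F) x = pd u (pd v F) x"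
  proof (rule schwarz)
    show "continuous_on UNIV (pd u (pd v F))"
      using pds_diff[OF F, of "[u,v]"] u v
      by (auto intro!: continuous_at_imp_continuous_on differentiable_imp_continuous_within)
  qed (use pds_diff[OF F, of "[u]"] pds_diff[OF F, of "[v]"] pds_diff[OF F, of "[]"] u v in auto)
qed

lemma pd_pds_comm:
  fixes F :: "'a::euclidean_space \<Rightarrow> complex"
  assumes F: "smooth F" and u: "u \<in> Basis" and ws: "set ws \<subseteq> Basis"
  shows "pd u (pds ws F) = pds ws (pd u F)"
  using ws
proof (induction ws)
  case Nil then show ?case by simp
next
  case (Cons w ws)
  then have ws': "set ws \<subseteq> Basis" and w: "w \<in> Basis" by auto
  have "pd u (pds (w#ws) F) = pd u (pd w (pds ws F))" by simp
  also have "\<dots> = pd w (pd u (pds ws F))"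
    by (rule schwarz_smooth[OF smooth_pds[OF F ws'] w u])
  also have "\<dots> = pds (w#ws) (pd u F)" using Cons.IH[OF ws'] by simp
  finally show ?case .
qed

lemma pd_zero_dir[simp]: "pd 0 F = (\<lambda>_. 0)"
  by (rule ext) (simp add: pd_def)

lemma pds_zero_in:
  assumes "0 \<in> set ws" shows "pds ws F = (\<lambda>_. 0)"
proof -
  obtain w1 w2 where ws: "ws = w1 @ 0 # w2" using assms split_list by metis
  have "pds w1 (\<lambda>_. 0::'b::real_normed_vector) = (\<lambda>_. 0)" for w1 :: "'a list"
    by (induction w1) auto
  then show ?thesis unfolding ws pds_append by simp
qed

lemma smooth_gen:
  assumes "smooth G" "set ws \<subseteq> insert 0 Basis"
  shows "pds ws G differentiable (at y)"
proof (cases "0 \<in> set ws")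
  case True then show ?thesis by (simp add: pds_zero_in)
next
  case False then have "set ws \<subseteq> Basis" using assms(2) by auto
  then show ?thesis using assms(1) pds_diff by blast
qed

lemma pd_fst_fun: "pd v (\<lambda>y. P (fst y)) y = pd (fst v) P (fst y)"
  by (simp add: pd_def)

lemma pd_snd_fun: "pd v (\<lambda>y. P (snd y)) y = pd (snd v) P (snd y)"
  by (simp add: pd_def)

lemma pds_fst_fun: "pds vs (\<lambda>y. P (fst y)) = (\<lambda>y. pds (map fst vs) P (fst y))"
  by (induction vs) (auto intro!: ext simp: pd_fst_fun)

lemma pds_snd_fun: "pds vs (\<lambda>y. P (snd y)) = (\<lambda>y. pds (map snd vs) P (snd y))"
  by (induction vs) (auto intro!: ext simp: pd_snd_fun)

lemma diff_fst:
  assumes "P differentiable (at (fst y))" shows "(\<lambda>y. P (fst y)) differentiable (at y)"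
  using differentiable_chain_at[OF bounded_linear_imp_differentiable[OF bounded_linear_fst] assms]
  by (simp add: o_def)

lemma diff_snd:
  assumes "P differentiable (at (snd y))" shows "(\<lambda>y. P (snd y)) differentiable (at y)"
  using differentiable_chain_at[OF bounded_linear_imp_differentiable[OF bounded_linear_snd] assms]
  by (simp add: o_def)

lemma Basis_fst: "v \<in> (Basis :: ('a::euclidean_space \<times> 'b::euclidean_space) set) \<Longrightarrow> fst v \<in> insert 0 Basis"
  by (auto simp: Basis_prod_def)

lemma Basis_snd: "v \<in> (Basis :: ('a::euclidean_space \<times> 'b::euclidean_space) set) \<Longrightarrow> snd v \<in> insert 0 Basis"
  by (auto simp: Basis_prod_def)

lemma smooth_fst:
  fixes G :: "'a::euclidean_space \<Rightarrow> 'c::real_normed_vector"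
  assumes "smooth G" shows "smooth (\<lambda>y::'a \<times> 'b::euclidean_space. G (fst y))"
  unfolding smooth_def pds_fst_fun
proof (intro allI impI)
  fix vs :: "('a \<times> 'b) list" and y assume "set vs \<subseteq> Basis"
  then have "set (map fst vs) \<subseteq> insert 0 Basis" using Basis_fst by auto
  then show "(\<lambda>y. pds (map fst vs) G (fst y)) differentiable at y"
    by (intro diff_fst smooth_gen assms)
qed

lemma smooth_snd:
  fixes G :: "'b::euclidean_space \<Rightarrow> 'c::real_normed_vector"
  assumes "smooth G" shows "smooth (\<lambda>y::'a::euclidean_space \<times> 'b. G (snd y))"
  unfolding smooth_def pds_snd_fun
proof (intro allI impI)
  fix vs :: "('a \<times> 'b) list" and y assume "set vs \<subseteq> Basis"
  then have "set (map snd vs) \<subseteq> insert 0 Basis" using Basis_snd by auto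
  then show "(\<lambda>y. pds (map snd vs) G (snd y)) differentiable at y"
    by (intro diff_snd smooth_gen assms)
qed

lemma pd_slice: "pd (0, w) F (t, x) = pd w (\<lambda>z. F (t, z)) x"
  by (simp add: pd_def)

lemma pds_slice: "pds (map (\<lambda>v. (0, v)) vs) F (t, x) = pds vs (\<lambda>z. F (t, z)) x"
proof (induction vs arbitrary: x)
  case Nil then show ?case by simp
next
  case (Cons v vs)
  have "pds (map (\<lambda>v. (0, v)) (v#vs)) F (t, x) = pd v (\<lambda>z. pds (map (\<lambda>v. (0, v)) vs) F (t, z)) x"
    by (simp add: pd_slice)
  also have "(\<lambda>z. pds (map (\<lambda>v. (0, v)) vs) F (t, z)) = pds vs (\<lambda>z. F (t, z))"
    using Cons.IH by auto
  finally show ?case by simp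
qed

lemma Basis_snd_in: "v \<in> Basis \<Longrightarrow> ((0::'a::euclidean_space), v) \<in> (Basis :: ('a \<times> 'b::euclidean_space) set)"
  by (auto simp: Basis_prod_def)

lemma Basis_fst_in: "v \<in> Basis \<Longrightarrow> (v, (0::'b::euclidean_space)) \<in> (Basis :: ('a::euclidean_space \<times> 'b) set)"
  by (auto simp: Basis_prod_def)

lemma smooth_slice:
  fixes F :: "'a::euclidean_space \<times> 'b::euclidean_space \<Rightarrow> 'c::real_normed_vector"
  assumes "smooth F" shows "smooth (\<lambda>z. F (t, z))"
  unfolding smooth_def
proof (intro allI impI)
  fix vs :: "'b list" and z assume vs: "set vs \<subseteq> Basis"
  have e: "pds vs (\<lambda>z. F (t, z)) = (\<lambda>z. pds (map (\<lambda>v. ((0::'a), v)) vs) F (t, z))"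
    by (rule ext) (simp add: pds_slice)
  have B: "set (map (\<lambda>v. ((0::'a), v)) vs) \<subseteq> Basis" using vs Basis_snd_in by auto
  have d1: "(\<lambda>z::'b. (t, z)) differentiable (at z)"
    by (rule differentiableI, rule derivative_eq_intros) (auto intro: derivative_eq_intros)
  show "pds vs (\<lambda>z. F (t, z)) differentiable at z"
    unfolding e using differentiable_chain_at[OF d1 pds_diff[OF assms B]] by (simp add: o_def)
qed

lemma pd_of_real:
  fixes g :: "'a::euclidean_space \<Rightarrow> real"
  assumes "g differentiable (at y)"
  shows "pd v (\<lambda>y. complex_of_real (g y)) y = complex_of_real (pd v g y)"
proof (rule pd_via)
  have "((\<lambda>s. g (y + s *\<^sub>R v)) has_real_derivative pd v g y) (at 0)"
    using pd_has0[OF assms] by (simp add: has_real_derivative_iff_has_vector_derivative)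
  then show "((\<lambda>s. complex_of_real (g (y + s *\<^sub>R v))) has_vector_derivative complex_of_real (pd v g y)) (at 0)"
    by (rule has_vector_derivative_of_real)
qed

lemma diff_of_real:
  fixes g :: "'a::euclidean_space \<Rightarrow> real"
  assumes "g differentiable (at y)"
  shows "(\<lambda>y. complex_of_real (g y)) differentiable (at y)"
  using differentiable_chain_at[OF assms bounded_linear_imp_differentiable[OF bounded_linear_of_real]]
  by (simp add: o_def)

lemma pds_of_real:
  fixes g :: "'a::euclidean_space \<Rightarrow> real"
  assumes "smooth g" "set vs \<subseteq> Basis"
  shows "pds vs (\<lambda>y. complex_of_real (g y)) = (\<lambda>y. complex_of_real (pds vs g y))"
  using assms(2)
proof (induction vs)
  case Nil then show ?case by simp
next
  case (Cons v vs)
  then have "set vs \<subseteq> Basis" by simp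
  then show ?case using Cons by (auto intro!: ext pd_of_real pds_diff assms(1))
qed

lemma smooth_of_real:
  fixes g :: "'a::euclidean_space \<Rightarrow> real"
  assumes "smooth g" shows "smooth (\<lambda>y. complex_of_real (g y))"
  unfolding smooth_def
  by (auto simp: pds_of_real[OF assms] intro!: diff_of_real pds_diff assms)

lemma smooth_coord: "smooth (\<lambda>z::(real,'n::finite) vec. complex_of_real (z $ i))"
proof -
  have lin: "bounded_linear (\<lambda>z::(real,'n) vec. complex_of_real (z $ i))"
    using bounded_linear_compose[OF bounded_linear_of_real bounded_linear_vec_nth[of i]] by (simp add: o_def)
  have pd1: "pd v (\<lambda>z::(real,'n) vec. complex_of_real (z $ i)) = (\<lambda>_. complex_of_real (v $ i))" for v
  proof (rule ext, rule pd_via)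
    fix y :: "(real,'n) vec"
    have "((\<lambda>s. complex_of_real (y $ i) + complex_of_real s * complex_of_real (v $ i)) has_vector_derivative complex_of_real (v $ i)) (at 0)"
      by (rule has_vector_derivative_real_field) (auto intro!: derivative_eq_intros)
    then show "((\<lambda>s. complex_of_real ((y + s *\<^sub>R v) $ i)) has_vector_derivative complex_of_real (v $ i)) (at 0)"
      by simp
  qed
  have "pds vs (\<lambda>z::(real,'n) vec. complex_of_real (z $ i)) differentiable (at y)" for vs y
  proof (cases vs rule: rev_cases)
    case Nil then show ?thesis using bounded_linear_imp_differentiable[OF lin] by simp
  next
    case (snoc ws w)
    show ?thesis unfolding snoc pds_append by (simp add: pd1 pds_const)
  qed
  then show ?thesis unfolding smooth_def by blast
qed

lemma smooth_pow:
  fixes f :: "'a::euclidean_space \<Rightarrow> complex"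
  assumes "smooth f" shows "smooth (\<lambda>z. f z ^ n)"
  by (induction n) (auto intro: smooth_const smooth_mult assms)

lemma smooth_prod:
  fixes f :: "'i \<Rightarrow> 'a::euclidean_space \<Rightarrow> complex"
  assumes "\<And>i. i \<in> A \<Longrightarrow> smooth (f i)"
  shows "smooth (\<lambda>y. \<Prod>i\<in>A. f i y)"
proof (cases "finite A")
  case True then show ?thesis using assms
    by (induction A rule: finite_induct) (auto intro: smooth_const smooth_mult)
next
  case False then show ?thesis by (simp add: smooth_const)
qed

lemma smooth_mpow: "smooth (\<lambda>z::(real,'n::finite) vec. complex_of_real (mpow z \<beta>))"
proof -
  have "(\<lambda>z::(real,'n) vec. complex_of_real (mpow z \<beta>)) = (\<lambda>z. \<Prod>i\<in>UNIV. (complex_of_real (z $ i)) ^ \<beta> i)"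
    by (simp add: mpow_def)
  then show ?thesis by (auto intro!: smooth_prod smooth_pow smooth_coord)
qed

lemma pd_scale:
  fixes F :: "'a::euclidean_space \<Rightarrow> complex"
  assumes "F differentiable (at y)"
  shows "pd v (\<lambda>y. a * F y) y = a * pd v F y"
  using pd_lin[OF assms differentiable_const, of v a 0] by simp

section \<open>The exponential test factor\<close>

definition ek :: "nat \<Rightarrow> 'm \<Rightarrow> (real,'m::finite) vec \<Rightarrow> complex" where
  "ek k r0 t = exp (\<i> * complex_of_real (real k * t $ r0))"

lemma ek_diff: fixes r0 :: "'m::finite" shows "ek k r0 differentiable (at t)"
proof -
  have b: "bounded_linear (\<lambda>t::(real,'m) vec. real k * t $ r0)"
    using bounded_linear_compose[OF bounded_linear_mult_right[of "real k"] bounded_linear_vec_nth[of r0]]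
    by (simp add: o_def)
  have "(\<lambda>t::(real,'m) vec. complex_of_real (real k * t $ r0)) differentiable (at t)"
    by (rule diff_of_real[OF bounded_linear_imp_differentiable[OF b]])
  then have i: "(\<lambda>t::(real,'m) vec. \<i> * complex_of_real (real k * t $ r0)) differentiable (at t)"
    by (intro differentiable_mult differentiable_const)
  have "(exp has_derivative (*) (exp z)) (at z)" for z :: complex
    using DERIV_exp[of z] by (simp add: has_field_derivative_def)
  then have "exp differentiable (at z)" for z :: complex by (rule differentiableI)
  moreover have e: "ek k r0 = exp \<circ> (\<lambda>t. \<i> * complex_of_real (real k * t $ r0))"
    by (rule ext) (simp only: ek_def o_def)
  ultimately show ?thesis unfolding e using differentiable_chain_at[OF i] by blast
qed

lemma pd_ek: "pd v (ek k r0) t = (\<i> * complex_of_real (real k * v $ r0)) * ek k r0 t"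
proof (rule pd_via)
  define A where "A = \<i> * complex_of_real (real k * t $ r0)"
  define B where "B = \<i> * complex_of_real (real k * v $ r0)"
  have "((\<lambda>z. exp (A + B * z)) has_field_derivative B * exp (A + B * complex_of_real 0)) (at (complex_of_real 0))"
    by (auto intro!: derivative_eq_intros)
  then have "((\<lambda>s. exp (A + B * complex_of_real s)) has_vector_derivative B * exp (A + B * complex_of_real 0)) (at 0)"
    by (rule has_vector_derivative_real_field)
  moreover have "(\<lambda>s. exp (A + B * complex_of_real s)) = (\<lambda>s. ek k r0 (t + s *\<^sub>R v))"
    by (rule ext) (simp add: ek_def A_def B_def algebra_simps)
  ultimately show "((\<lambda>s. ek k r0 (t + s *\<^sub>R v)) has_vector_derivative (\<i> * complex_of_real (real k * v $ r0)) * ek k r0 t) (at 0)"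
    by (simp add: ek_def A_def B_def)
qed

lemma pds_ek: "pds vs (ek k r0) = (\<lambda>t. prod_list (map (\<lambda>v. \<i> * complex_of_real (real k * v $ r0)) vs) * ek k r0 t)"
proof (induction vs)
  case Nil then show ?case by simp
next
  case (Cons v vs)
  show ?case using Cons by (auto intro!: ext simp: pd_scale ek_diff pd_ek)
qed

lemma smooth_ek: "smooth (ek k r0)"
  unfolding smooth_def pds_ek by (auto intro!: differentiable_mult differentiable_const ek_diff)

lemma norm_ek[simp]: "norm (ek k r0 t) = 1"
  unfolding ek_def by (rule norm_exp_i_times)

lemma norm_prod_list_ek:
  assumes "\<And>v. v \<in> set vs \<Longrightarrow> \<bar>v $ r0\<bar> \<le> 1"
  shows "norm (prod_list (map (\<lambda>v. \<i> * complex_of_real (real k * v $ r0)) vs)) \<le> real k ^ length vs"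
  using assms
proof (induction vs)
  case Nil then show ?case by simp
next
  case (Cons v vs)
  have "norm (\<i> * complex_of_real (real k * v $ r0)) \<le> real k"
    using Cons.prems[of v] by (simp add: norm_mult abs_mult mult_left_le)
  then show ?case using Cons
    by (auto simp: norm_mult intro!: mult_mono)
qed

lemma idx_list_zero[simp]: "idx_list (\<lambda>_. 0) = []"
  by (simp add: idx_list_def)

lemma sorted_concat_rep: "sorted L \<Longrightarrow> sorted (concat (map (\<lambda>i. replicate (\<beta> i) i) L))"
proof (induction L)
  case Nil then show ?case by simp
next
  case (Cons l L)
  then show ?case by (auto simp: sorted_append)
qed

lemma sorted_idx: "sorted (idx_list \<beta>)"
  unfolding idx_list_def by (rule sorted_concat_rep) simp

lemma count_list_rep: "count_list (replicate n x) y = (if x = y then n else 0)"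
  by (induction n) auto

lemma count_concat_rep: "distinct L \<Longrightarrow> count_list (concat (map (\<lambda>i. replicate (\<beta> i) i) L)) j = (if j \<in> set L then \<beta> j else 0)"
  by (induction L) (auto simp: count_list_append count_list_rep)

lemma count_idx: "count_list (idx_list (\<beta>::'k::{finite,linorder} \<Rightarrow> nat)) j = \<beta> j"
  unfolding idx_list_def by (subst count_concat_rep) auto

lemma length_idx: "length (idx_list \<beta>) = mabs \<beta>"
proof -
  have "length (idx_list \<beta>) = sum_list (map \<beta> (sorted_list_of_set UNIV))"
    unfolding idx_list_def by (simp add: length_concat o_def)
  also have "\<dots> = sum \<beta> UNIV" by (simp add: sum_list_distinct_conv_sum_set)
  finally show ?thesis by (simp add: mabs_def)
qed

lemma idx_count: "sorted xs \<Longrightarrow> idx_list (\<lambda>i. count_list xs i) = (xs :: 'k::{finite,linorder} list)"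
proof -
  assume s: "sorted xs"
  have "mset (idx_list (\<lambda>i. count_list xs i)) = mset xs"
    by (simp add: multiset_eq_iff count_mset count_idx)
  then have "sort xs = idx_list (\<lambda>i. count_list xs i)"
    by (intro properties_for_sort sorted_idx)
  then show ?thesis using sorted_sort_id[OF s] by simp
qed

lemma dirs_x_Basis: "set (dirs_x \<beta> :: ((real,'m::{finite,linorder}) vec \<times> (real,'n::{finite,linorder}) vec) list) \<subseteq> Basis"
  by (auto simp: dirs_x_def Basis_prod_def)

lemma dirs_t_Basis: "set (dirs_t \<gamma> :: ((real,'m::{finite,linorder}) vec \<times> (real,'n::{finite,linorder}) vec) list) \<subseteq> Basis"
  by (auto simp: dirs_t_def Basis_prod_def)

lemma Ptr_tx_rep:
  fixes \<phi> :: "('m::{finite,linorder},'n::{finite,linorder}) fn"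
  shows "Ptr_tx c M \<phi> = (\<lambda>y. \<Sum>(\<alpha>,\<beta>)\<in>midx_le M. c \<alpha> \<beta> * (-1)^mabs \<alpha> *
            pds (dirs_x \<alpha>) (\<lambda>y. complex_of_real (mpow (snd y) \<beta>) * \<phi> y) y)"
proof (rule ext)
  fix y :: "(real,'m) vec \<times> (real,'n) vec"
  obtain t x where y: "y = (t, x)" by (cases y)
  have e: "pds (dirs_x \<alpha>) F (t, x) = pds (map (\<lambda>i. axis i (1::real)) (idx_list \<alpha>)) (\<lambda>z. F (t, z)) x"
    for \<alpha> and F :: "('m,'n) fn"
  proof -
    have "dirs_x \<alpha> = map (\<lambda>v. ((0::(real,'m) vec), v)) (map (\<lambda>i. axis i (1::real)) (idx_list \<alpha>))"
      by (simp add: dirs_x_def)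
    then show ?thesis by (simp only: pds_slice)
  qed
  show "Ptr_tx c M \<phi> y = (\<Sum>(\<alpha>,\<beta>)\<in>midx_le M. c \<alpha> \<beta> * (-1)^mabs \<alpha> *
            pds (dirs_x \<alpha>) (\<lambda>y. complex_of_real (mpow (snd y) \<beta>) * \<phi> y) y)"
    unfolding y Ptr_tx_def Ptr_def Dk_def e by simp
qed

lemma smooth_mpow_snd:
  "smooth (\<lambda>y::(real,'m::finite) vec \<times> (real,'n::finite) vec. complex_of_real (mpow (snd y) \<beta>))"
  by (rule smooth_snd[OF smooth_mpow])

lemma smooth_Ptr_tx:
  fixes \<phi> :: "('m::{finite,linorder},'n::{finite,linorder}) fn"
  assumes "smooth \<phi>" shows "smooth (Ptr_tx c M \<phi>)"
  unfolding Ptr_tx_rep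
  by (auto intro!: smooth_sum smooth_mult smooth_const
       smooth_pds smooth_mpow_snd assms dirs_x_Basis simp: case_prod_beta)

lemma Ptr_tx_lin:
  fixes F G :: "('m::{finite,linorder},'n::{finite,linorder}) fn"
  assumes F: "smooth F" and G: "smooth G"
  shows "Ptr_tx c M (\<lambda>y. a * F y + b * G y) = (\<lambda>y. a * Ptr_tx c M F y + b * Ptr_tx c M G y)"
proof (rule ext)
  fix y
  have e: "pds (dirs_x \<alpha>) (\<lambda>y. complex_of_real (mpow (snd y) \<beta>) * (a * F y + b * G y)) y
      = a * pds (dirs_x \<alpha>) (\<lambda>y. complex_of_real (mpow (snd y) \<beta>) * F y) y
      + b * pds (dirs_x \<alpha>) (\<lambda>y. complex_of_real (mpow (snd y) \<beta>) * G y) y" for \<alpha> \<beta>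
  proof -
    have "(\<lambda>y. complex_of_real (mpow (snd y) \<beta>) * (a * F y + b * G y))
        = (\<lambda>y. a * (complex_of_real (mpow (snd y) \<beta>) * F y) + b * (complex_of_real (mpow (snd y) \<beta>) * G y))"
      by (rule ext) (simp add: algebra_simps)
    then show ?thesis
      by (simp add: pds_lin[OF smooth_mult[OF smooth_mpow_snd F] smooth_mult[OF smooth_mpow_snd G] dirs_x_Basis])
  qed
  show "Ptr_tx c M (\<lambda>y. a * F y + b * G y) y = a * Ptr_tx c M F y + b * Ptr_tx c M G y"
    unfolding Ptr_tx_rep e
    by (simp add: sum_distrib_left sum.distrib case_prod_beta algebra_simps)
qed

lemma Ptr_tx_comm:
  fixes F :: "('m::{finite,linorder},'n::{finite,linorder}) fn"
  assumes F: "smooth F" and u: "u \<in> Basis" and u0: "snd u = 0"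
  shows "pd u (Ptr_tx c M F) = Ptr_tx c M (pd u F)"
proof (rule ext)
  fix y
  have phi: "pd u (\<lambda>y. complex_of_real (mpow (snd y) \<beta>) * F y) = (\<lambda>y. complex_of_real (mpow (snd y) \<beta>) * pd u F y)" for \<beta>
  proof (rule ext)
    fix y
    show "pd u (\<lambda>y. complex_of_real (mpow (snd y) \<beta>) * F y) y = complex_of_real (mpow (snd y) \<beta>) * pd u F y"
      by (subst pd_mult) (auto intro: smooth_diff smooth_mpow_snd F simp: pd_snd_fun[of u "\<lambda>z. complex_of_real (mpow z \<beta>)"] u0)
  qed
  have "pd u (Ptr_tx c M F) y = pd u (\<lambda>y. \<Sum>p\<in>midx_le M. c (fst p) (snd p) * (-1)^mabs (fst p) *
            pds (dirs_x (fst p)) (\<lambda>y. complex_of_real (mpow (snd y) (snd p)) * F y) y) y"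
    unfolding Ptr_tx_rep by (simp add: case_prod_beta)
  also have "\<dots> = (\<Sum>p\<in>midx_le M. pd u (\<lambda>y. c (fst p) (snd p) * (-1)^mabs (fst p) *
            pds (dirs_x (fst p)) (\<lambda>y. complex_of_real (mpow (snd y) (snd p)) * F y) y) y)"
    by (rule pd_sum) (auto intro!: differentiable_mult differentiable_const pds_diff smooth_mult smooth_mpow_snd F dirs_x_Basis)
  also have "\<dots> = (\<Sum>p\<in>midx_le M. c (fst p) (snd p) * (-1)^mabs (fst p) *
            pd u (pds (dirs_x (fst p)) (\<lambda>y. complex_of_real (mpow (snd y) (snd p)) * F y)) y)"
    by (intro sum.cong refl pd_scale pds_diff smooth_mult smooth_mpow_snd F dirs_x_Basis)
  also have "\<dots> = (\<Sum>p\<in>midx_le M. c (fst p) (snd p) * (-1)^mabs (fst p) *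
            pds (dirs_x (fst p)) (\<lambda>y. complex_of_real (mpow (snd y) (snd p)) * pd u F y) y)"
    by (intro sum.cong refl) (simp add: pd_pds_comm[OF smooth_mult[OF smooth_mpow_snd F] u dirs_x_Basis] phi)
  also have "\<dots> = Ptr_tx c M (pd u F) y"
    unfolding Ptr_tx_rep by (simp add: case_prod_beta)
  finally show "pd u (Ptr_tx c M F) y = Ptr_tx c M (pd u F) y" .
qed

lemma Ptr_tx_scal:
  fixes F :: "('m::{finite,linorder},'n::{finite,linorder}) fn"
  assumes F: "smooth F"
  shows "Ptr_tx c M (\<lambda>y. A (fst y) * F y) = (\<lambda>y. A (fst y) * Ptr_tx c M F y)"
proof (rule ext)
  fix y :: "(real,'m) vec \<times> (real,'n) vec"
  obtain t x where y: "y = (t, x)" by (cases y)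
  have B: "set (map (\<lambda>i. axis i (1::real)) (idx_list \<alpha>)) \<subseteq> (Basis :: (real,'n) vec set)" for \<alpha> :: "'n \<Rightarrow> nat"
    by auto
  have e: "pds (map (\<lambda>i. axis i 1) (idx_list \<alpha>)) (\<lambda>z. complex_of_real (mpow z \<beta>) * (A t * F (t, z))) x
      = A t * pds (map (\<lambda>i. axis i 1) (idx_list \<alpha>)) (\<lambda>z. complex_of_real (mpow z \<beta>) * F (t, z)) x" for \<alpha> \<beta>
  proof -
    have "(\<lambda>z. complex_of_real (mpow z \<beta>) * (A t * F (t, z))) = (\<lambda>z. A t * (complex_of_real (mpow z \<beta>) * F (t, z)))"
      by (rule ext) (simp add: algebra_simps)
    then show ?thesis
      using pds_scale[OF smooth_mult[OF smooth_mpow smooth_slice[OF F]] B, where a="A t"] by simp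
  qed
  show "Ptr_tx c M (\<lambda>y. A (fst y) * F y) y = A (fst y) * Ptr_tx c M F y"
    unfolding y Ptr_tx_def Ptr_def Dk_def fst_conv snd_conv e
    by (simp add: sum_distrib_left case_prod_beta algebra_simps)
qed

lemma ins_sign_swap_lt:
  fixes J :: "'m::{finite,linorder} set"
  assumes rs: "r < s" and r: "r \<in> J" and s: "s \<in> J"
  shows "ins_sign s J * ins_sign r (J - {s}) = - (ins_sign r J * ins_sign s (J - {r}))"
proof -
  have e1: "{x \<in> J - {s}. x < r} = {x \<in> J. x < r}" using rs by auto
  have e2: "{x \<in> J - {r}. x < s} = {x \<in> J. x < s} - {r}" by auto
  have rin: "r \<in> {x \<in> J. x < s}" using r rs by auto
  define n where "n = card {x \<in> J. x < s}"
  have ne: "{x \<in> J. x < s} \<noteq> {}" using rin by blast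
  have n1: "0 < n" unfolding n_def using ne by (simp add: card_gt_0_iff)
  have c2: "card ({x \<in> J. x < s} - {r}) = n - 1" unfolding n_def using rin by simp
  have "(-1::complex) ^ n = - ((-1) ^ (n - 1))"
    using n1 by (cases n) auto
  then show ?thesis unfolding ins_sign_def e1 e2 c2 n_def[symmetric] by simp
qed

lemma ins_sign_swap:
  fixes J :: "'m::{finite,linorder} set"
  assumes rs: "r \<noteq> s" and r: "r \<in> J" and s: "s \<in> J"
  shows "ins_sign s J * ins_sign r (J - {s}) = - (ins_sign r J * ins_sign s (J - {r}))"
proof (cases "r < s")
  case True then show ?thesis using ins_sign_swap_lt[OF True r s] by simp
next
  case False then have "s < r" using rs by auto
  from ins_sign_swap_lt[OF this s r] show ?thesis by (simp add: algebra_simps)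
qed

lemma antisym_sum_zero:
  fixes h :: "'i \<Rightarrow> 'i \<Rightarrow> complex"
  assumes "\<And>s r. h s r = - h r s"
  shows "(\<Sum>s\<in>J. \<Sum>r\<in>J. h s r) = 0"
proof -
  have "(\<Sum>s\<in>J. \<Sum>r\<in>J. h s r) = (\<Sum>r\<in>J. \<Sum>s\<in>J. h s r)" by (rule sum.swap)
  also have "\<dots> = (\<Sum>r\<in>J. \<Sum>s\<in>J. - h r s)" by (intro sum.cong refl) (rule assms)
  also have "\<dots> = - (\<Sum>r\<in>J. \<Sum>s\<in>J. h r s)" by (simp add: sum_negf)
  finally show ?thesis by simp
qed

lemma sum_minus_single:
  fixes f :: "'i \<Rightarrow> complex"
  assumes "finite J"
  shows "(\<Sum>r\<in>J-{s}. f r) = (\<Sum>r\<in>J. if r = s then 0 else f r)"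
proof -
  have "(\<Sum>r\<in>J. if r = s then 0 else f r) = (\<Sum>r\<in>J-{s}. if r = s then 0 else f r)"
    using assms by (intro sum.mono_neutral_right) auto
  then show ?thesis by simp
qed

lemma sum_combine:
  fixes X Y :: "'i \<Rightarrow> complex"
  shows "a * (- sum X A + b * sum Y A) = (\<Sum>r\<in>A. a * (- X r + b * Y r))"
proof -
  have "(\<Sum>r\<in>A. a * (- X r + b * Y r)) = (\<Sum>r\<in>A. - (a * X r) + a * (b * Y r))"
    by (simp add: ring_distribs)
  also have "\<dots> = (\<Sum>r\<in>A. - (a * X r)) + (\<Sum>r\<in>A. a * (b * Y r))" by (rule sum.distrib)
  also have "\<dots> = a * (- sum X A + b * sum Y A)" by (simp add: sum_negf sum_distrib_left ring_distribs)
  finally show ?thesis by simp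
qed

section \<open>The key cancellation\<close>

lemma Lop_Lop_zero:
  fixes a :: "'m::{finite,linorder} \<Rightarrow> (real,'m) vec \<Rightarrow> real"
    and c :: "('n::{finite,linorder} \<Rightarrow> nat) \<Rightarrow> ('n \<Rightarrow> nat) \<Rightarrow> complex"
    and \<phi> :: "('m,'n) fn"
  assumes a_sm: "\<And>r. smooth (a r)" and cl: "closed_1form a" and \<phi>: "smooth \<phi>"
  shows "Lop c M a (Lop c M a (\<lambda>K \<psi>. if K = K0 then \<psi> p0 else 0)) J \<phi> = 0"
proof -
  define A where "A r = (\<lambda>y::(real,'m) vec \<times> (real,'n) vec. complex_of_real (a r (fst y)))" for r
  define D where "D r F = pd ((axis r (1::real), 0) :: (real,'m) vec \<times> (real,'n) vec) F" for r and F :: "('m,'n) fn"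
  define T where "T r F = Ptr_tx c M (\<lambda>y. A r y * F y)" for r and F :: "('m,'n) fn"
  define l where "l r F = - D r F p0 + \<i> * T r F p0" for r F
  define Q where "Q r s = - l r (D s \<phi>) + \<i> * l r (T s \<phi>)" for r s
  define DA where "DA r s = (\<lambda>y::(real,'m) vec \<times> (real,'n) vec. complex_of_real (pd (axis r 1) (a s) (fst y)))" for r s
  have uB: "((axis r (1::real), 0) :: (real,'m) vec \<times> (real,'n) vec) \<in> Basis" for r
    by (rule Basis_fst_in) simp
  have smA: "smooth (A r)" for r unfolding A_def by (intro smooth_fst smooth_of_real a_sm)
  have smD: "smooth F \<Longrightarrow> smooth (D r F)" for r F unfolding D_def by (rule smooth_pd) (auto intro: uB)
  have smDA: "smooth (DA r s)" for r s unfolding DA_def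
    by (intro smooth_fst smooth_of_real smooth_pd a_sm) simp
  have DA_sym: "DA r s = DA s r" for r s
    using cl unfolding DA_def closed_1form_def by auto
  have DA_eq: "D r (A s) = DA r s" for r s
  proof (rule ext)
    fix y
    have "D r (A s) y = pd (axis r 1) (\<lambda>t. complex_of_real (a s t)) (fst y)"
      unfolding D_def A_def using pd_fst_fun[where P="\<lambda>t. complex_of_real (a s t)" and v="(axis r 1, 0)"] by simp
    also have "\<dots> = complex_of_real (pd (axis r 1) (a s) (fst y))"
      by (rule pd_of_real) (rule smooth_diff[OF a_sm])
    finally show "D r (A s) y = DA r s y" by (simp add: DA_def)
  qed
  have DD: "D r (D s \<phi>) = D s (D r \<phi>)" for r s
    unfolding D_def by (rule schwarz_smooth[OF \<phi> uB uB])
  have DT: "D r (T s \<phi>) = (\<lambda>y. Ptr_tx c M (\<lambda>y. DA r s y * \<phi> y) y + Ptr_tx c M (\<lambda>y. A s y * D r \<phi> y) y)" for r s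
  proof -
    have "D r (T s \<phi>) = Ptr_tx c M (D r (\<lambda>y. A s y * \<phi> y))"
      unfolding D_def T_def by (rule Ptr_tx_comm[OF smooth_mult[OF smA \<phi>] uB]) simp
    also have "D r (\<lambda>y. A s y * \<phi> y) = (\<lambda>y. 1 * (DA r s y * \<phi> y) + 1 * (A s y * D r \<phi> y))"
    proof (rule ext)
      fix y
      have "D r (\<lambda>y. A s y * \<phi> y) y = D r (A s) y * \<phi> y + A s y * D r \<phi> y"
        unfolding D_def by (rule pd_mult) (auto intro: smooth_diff smA \<phi>)
      then show "D r (\<lambda>y. A s y * \<phi> y) y = 1 * (DA r s y * \<phi> y) + 1 * (A s y * D r \<phi> y)"
        by (simp add: DA_eq)
    qed
    also have "Ptr_tx c M (\<lambda>y. 1 * (DA r s y * \<phi> y) + 1 * (A s y * D r \<phi> y))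
        = (\<lambda>y. 1 * Ptr_tx c M (\<lambda>y. DA r s y * \<phi> y) y + 1 * Ptr_tx c M (\<lambda>y. A s y * D r \<phi> y) y)"
      by (rule Ptr_tx_lin) (auto intro: smooth_mult smDA smA smD \<phi>)
    finally show ?thesis by simp
  qed
  have MIX: "T r (D s \<phi>) p0 + D r (T s \<phi>) p0 = T s (D r \<phi>) p0 + D s (T r \<phi>) p0" for r s
    unfolding DT[of r s] DT[of s r] DA_sym[of r s] unfolding T_def by (simp add: algebra_simps)
  have TT: "T r (T s \<phi>) = T s (T r \<phi>)" for r s
  proof -
    have e: "T s \<phi> = (\<lambda>y. A s y * Ptr_tx c M \<phi> y)" for s
      unfolding T_def A_def by (rule Ptr_tx_scal[OF \<phi>, where A="\<lambda>t. complex_of_real (a s t)"])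
    show ?thesis unfolding e unfolding T_def by (simp add: mult.left_commute)
  qed
  have Qf: "Q r s = D r (D s \<phi>) p0 - \<i> * (T r (D s \<phi>) p0 + D r (T s \<phi>) p0) - T r (T s \<phi>) p0" for r s
    unfolding Q_def l_def by (simp add: algebra_simps)
  have Qsym: "Q r s = Q s r" for r s
    unfolding Qf MIX[of r s] DD[of r s] TT[of r s] by simp
  have Lv: "Lop c M a (\<lambda>K \<psi>. if K = K0 then \<psi> p0 else 0) K \<psi> = (\<Sum>r\<in>K. ins_sign r K * (if K - {r} = K0 then l r \<psi> else 0))" for K \<psi>
    unfolding Lop_def l_def D_def T_def A_def by (intro sum.cong refl) auto
  have L1: "Lop c M a w J \<phi> = (\<Sum>s\<in>J. ins_sign s J * (- w (J-{s}) (D s \<phi>) + \<i> * w (J-{s}) (T s \<phi>)))" for w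
    by (simp add: Lop_def D_def T_def A_def)
  define h where "h s r = (if r \<noteq> s \<and> r \<in> J \<and> s \<in> J then ins_sign s J * ins_sign r (J - {s}) * (if J - {s} - {r} = K0 then Q r s else 0) else 0)" for s r
  have "Lop c M a (Lop c M a (\<lambda>K \<psi>. if K = K0 then \<psi> p0 else 0)) J \<phi> = (\<Sum>s\<in>J. \<Sum>r\<in>J. h s r)"
    unfolding L1 Lv
  proof (intro sum.cong refl)
    fix s assume s: "s \<in> J"
    have "ins_sign s J * (- (\<Sum>r\<in>J - {s}. ins_sign r (J - {s}) * (if J - {s} - {r} = K0 then l r (D s \<phi>) else 0)) +
          \<i> * (\<Sum>r\<in>J - {s}. ins_sign r (J - {s}) * (if J - {s} - {r} = K0 then l r (T s \<phi>) else 0)))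
        = (\<Sum>r\<in>J - {s}. ins_sign s J * (- (ins_sign r (J - {s}) * (if J - {s} - {r} = K0 then l r (D s \<phi>) else 0)) +
          \<i> * (ins_sign r (J - {s}) * (if J - {s} - {r} = K0 then l r (T s \<phi>) else 0))))"
      by (rule sum_combine)
    also have "\<dots> = (\<Sum>r\<in>J - {s}. h s r)"
      by (intro sum.cong refl) (auto simp: h_def s Q_def algebra_simps)
    also have "\<dots> = (\<Sum>r\<in>J. h s r)"
      by (subst sum_minus_single) (auto simp: h_def intro!: sum.cong)
    finally show "ins_sign s J * (- (\<Sum>r\<in>J - {s}. ins_sign r (J - {s}) * (if J - {s} - {r} = K0 then l r (D s \<phi>) else 0)) +
          \<i> * (\<Sum>r\<in>J - {s}. ins_sign r (J - {s}) * (if J - {s} - {r} = K0 then l r (T s \<phi>) else 0)))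
        = (\<Sum>r\<in>J. h s r)" .
  qed
  also have "\<dots> = 0"
  proof (rule antisym_sum_zero)
    fix s r
    show "h s r = - h r s"
    proof (cases "r \<noteq> s \<and> r \<in> J \<and> s \<in> J")
      case True
      then have sg: "ins_sign s J * ins_sign r (J - {s}) = - (ins_sign r J * ins_sign s (J - {r}))"
        by (intro ins_sign_swap) auto
      have "J - {s} - {r} = J - {r} - {s}" by auto
      then show ?thesis using True sg Qsym[of r s] unfolding h_def by (auto simp: algebra_simps)
    next
      case False then show ?thesis unfolding h_def by auto
    qed
  qed
  finally show ?thesis .
qed

lemma F_space_smooth: "\<phi> \<in> F_space \<mu> \<Longrightarrow> smooth \<phi>"
  by (auto simp: F_space_def S_space_def)

lemma mpow_zero[simp]: "mpow x (\<lambda>_. 0) = 1" by (simp add: mpow_def)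
lemma mfact_zero[simp]: "mfact (\<lambda>_. 0) = 1" by (simp add: mfact_def)
lemma mabs_zero[simp]: "mabs (\<lambda>_. 0) = 0" by (simp add: mabs_def)
lemma dirs_x_zero[simp]: "dirs_x (\<lambda>_. 0) = []" by (simp add: dirs_x_def)
lemma dirs_t_zero[simp]: "dirs_t (\<lambda>_. 0) = []" by (simp add: dirs_t_def)

lemma mfact_ge1: "1 \<le> mfact \<alpha>"
  unfolding mfact_def by (rule prod_ge_1) (simp add: fact_ge_1)

lemma zero_F_space: "(\<lambda>_. 0) \<in> F_space \<mu>"
proof -
  have "(\<lambda>_. 0) \<in> S_space 2 \<mu> 1"
    unfolding S_space_def S_bound_def t_periodic_def
    by (auto intro!: exI[of _ 0] smooth_const simp: pds_const)
  then show ?thesis unfolding F_space_def by force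
qed

lemma S_bound_nonneg:
  fixes \<phi> :: "('m::{finite,linorder},'n::{finite,linorder}) fn"
  assumes "S_bound \<sigma> \<mu> C \<phi> B" shows "0 \<le> B"
proof -
  have "\<bar>mpow (0::(real,'n) vec) (\<lambda>_. 0)\<bar> * norm (pds (dirs_x (\<lambda>_. 0) @ dirs_t (\<lambda>_. 0)) \<phi> (0, 0))
     \<le> B * C ^ (mabs (\<lambda>_::'n. 0) + mabs (\<lambda>_::'n. 0) + mabs (\<lambda>_::'m. 0)) * mfact (\<lambda>_::'m. 0) powr \<sigma> * (mfact (\<lambda>_::'n. 0) * mfact (\<lambda>_::'n. 0)) powr \<mu>"
    using assms unfolding S_bound_def by blast
  then have "norm (\<phi> (0,0)) \<le> B" by simp
  then show ?thesis using norm_ge_zero order_trans by blast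
qed

lemma S_bound_D:
  fixes \<phi> :: "('m::{finite,linorder},'n::{finite,linorder}) fn"
  assumes "S_bound \<sigma> \<mu> C \<phi> B"
  shows "norm (pd (axis r (1::real), 0) \<phi> y) \<le> B * (C ^ mabs (\<lambda>i. count_list [r] i) * mfact (\<lambda>i. count_list [r] i) powr \<sigma>)"
proof -
  obtain t x where y: "y = (t, x)" by (cases y)
  define \<gamma> where "\<gamma> = (\<lambda>i. count_list [r] i)"
  have i: "idx_list \<gamma> = [r]" unfolding \<gamma>_def by (rule idx_count) simp
  have "\<bar>mpow x (\<lambda>_. 0)\<bar> * norm (pds (dirs_x (\<lambda>_. 0) @ dirs_t \<gamma>) \<phi> (t, x))
     \<le> B * C ^ (mabs (\<lambda>_::'n. 0) + mabs (\<lambda>_::'n. 0) + mabs \<gamma>) * mfact \<gamma> powr \<sigma> * (mfact (\<lambda>_::'n. 0) * mfact (\<lambda>_::'n. 0)) powr \<mu>"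
    using assms unfolding S_bound_def by blast
  then show ?thesis by (simp add: y dirs_t_def i \<gamma>_def[symmetric] mult.assoc)
qed

lemma S_bound_x:
  fixes \<phi> :: "('m::{finite,linorder},'n::{finite,linorder}) fn"
  assumes "S_bound \<sigma> \<mu> C \<phi> B" and b: "sorted b"
  shows "norm (pds (map (\<lambda>i. ((0::(real,'m) vec), axis i (1::real))) b) \<phi> y)
     \<le> B * (C ^ mabs (\<lambda>i. count_list b i) * (mfact (\<lambda>i. count_list b i)) powr \<mu>)"
proof -
  obtain t x where y: "y = (t, x)" by (cases y)
  define \<beta> where "\<beta> = (\<lambda>i. count_list b i)"
  have i: "idx_list \<beta> = b" unfolding \<beta>_def by (rule idx_count[OF b])
  have "\<bar>mpow x (\<lambda>_. 0)\<bar> * norm (pds (dirs_x \<beta> @ dirs_t (\<lambda>_. 0)) \<phi> (t, x))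
     \<le> B * C ^ (mabs (\<lambda>_::'n. 0) + mabs \<beta> + mabs (\<lambda>_::'m. 0)) * mfact (\<lambda>_::'m. 0) powr \<sigma> * (mfact (\<lambda>_::'n. 0) * mfact \<beta>) powr \<mu>"
    using assms unfolding S_bound_def by blast
  then show ?thesis by (simp add: y dirs_x_def i \<beta>_def[symmetric] mult.assoc)
qed

lemma norm_sum_list_le:
  fixes f :: "'k \<Rightarrow> complex"
  shows "norm (sum_list (map f xs)) \<le> sum_list (map (\<lambda>x. norm (f x)) xs)"
  by (induction xs) (auto intro: order_trans[OF norm_triangle_ineq])

lemma sum_list_mult_left: "sum_list (map (\<lambda>x. (B::real) * f x) xs) = B * sum_list (map f xs)"
  by (induction xs) (auto simp: algebra_simps)

lemma T_bound:
  fixes \<phi> :: "('m::{finite,linorder},'n::{finite,linorder}) fn"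
  assumes \<phi>: "smooth \<phi>" and SB: "S_bound \<sigma> \<mu> C \<phi> B" and Ar: "smooth Ar"
  shows "norm (Ptr_tx c M (\<lambda>y. Ar y * \<phi> y) pt) \<le> B *
    (\<Sum>p\<in>midx_le M. norm (c (fst p) (snd p)) *
       sum_list (map (\<lambda>ab. norm (pds (map (\<lambda>i. ((0::(real,'m) vec), axis i (1::real))) (fst ab))
                  (\<lambda>y. complex_of_real (mpow (snd y) (snd p)) * Ar y) pt)
                * (C ^ mabs (\<lambda>i. count_list (snd ab) i) * (mfact (\<lambda>i. count_list (snd ab) i)) powr \<mu>))
              (lb (idx_list (fst p)))))"
proof -
  define g where "g = (\<lambda>i::'n. ((0::(real,'m) vec), axis i (1::real)))"
  define kX where "kX b = C ^ mabs (\<lambda>i. count_list b i) * (mfact (\<lambda>i. count_list b i)) powr \<mu>" for b :: "'n list"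
  define F where "F \<beta> = (\<lambda>y::(real,'m) vec \<times> (real,'n) vec. complex_of_real (mpow (snd y) \<beta>) * Ar y)" for \<beta>
  have gB: "set (map g ix) \<subseteq> Basis" for ix unfolding g_def by (auto intro: Basis_snd_in)
  have smF: "smooth (F \<beta>)" for \<beta> unfolding F_def by (intro smooth_mult smooth_mpow_snd Ar)
  have dx: "dirs_x \<alpha> = map g (idx_list \<alpha>)" for \<alpha> :: "'n \<Rightarrow> nat" unfolding dirs_x_def g_def by simp
  have trm: "norm (pds (dirs_x \<alpha>) (\<lambda>y. complex_of_real (mpow (snd y) \<beta>) * (Ar y * \<phi> y)) pt)
      \<le> B * sum_list (map (\<lambda>ab. norm (pds (map g (fst ab)) (F \<beta>) pt) * kX (snd ab)) (lb (idx_list \<alpha>)))" for \<alpha> \<beta>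
  proof -
    have fe: "(\<lambda>y. complex_of_real (mpow (snd y) \<beta>) * (Ar y * \<phi> y)) = (\<lambda>y. F \<beta> y * \<phi> y)"
      unfolding F_def by (rule ext) (simp add: mult.assoc)
    have "norm (pds (dirs_x \<alpha>) (\<lambda>y. complex_of_real (mpow (snd y) \<beta>) * (Ar y * \<phi> y)) pt)
        = norm (sum_list (map (\<lambda>ab. pds (map g (fst ab)) (F \<beta>) pt * pds (map g (snd ab)) \<phi> pt) (lb (idx_list \<alpha>))))"
      unfolding fe dx leibniz[OF smF \<phi> gB] ..
    also have "\<dots> \<le> sum_list (map (\<lambda>ab. norm (pds (map g (fst ab)) (F \<beta>) pt * pds (map g (snd ab)) \<phi> pt)) (lb (idx_list \<alpha>)))"
      by (rule norm_sum_list_le)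
    also have "\<dots> \<le> sum_list (map (\<lambda>ab. norm (pds (map g (fst ab)) (F \<beta>) pt) * (B * kX (snd ab))) (lb (idx_list \<alpha>)))"
    proof (rule sum_list_mono)
      fix ab assume ab: "ab \<in> set (lb (idx_list \<alpha>))"
      have "sorted (snd ab)" using lb_sorted[of "fst ab" "snd ab" "idx_list \<alpha>"] ab sorted_idx[of \<alpha>] by simp
      from S_bound_x[OF SB this, of pt]
      have "norm (pds (map g (snd ab)) \<phi> pt) \<le> B * kX (snd ab)" unfolding g_def kX_def .
      then show "norm (pds (map g (fst ab)) (F \<beta>) pt * pds (map g (snd ab)) \<phi> pt) \<le> norm (pds (map g (fst ab)) (F \<beta>) pt) * (B * kX (snd ab))"
        unfolding norm_mult by (rule mult_left_mono) simp
    qed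
    also have "\<dots> = B * sum_list (map (\<lambda>ab. norm (pds (map g (fst ab)) (F \<beta>) pt) * kX (snd ab)) (lb (idx_list \<alpha>)))"
      by (subst sum_list_mult_left[symmetric]) (simp add: algebra_simps)
    finally show ?thesis .
  qed
  have "norm (Ptr_tx c M (\<lambda>y. Ar y * \<phi> y) pt)
     = norm (\<Sum>p\<in>midx_le M. c (fst p) (snd p) * (-1)^mabs (fst p) *
            pds (dirs_x (fst p)) (\<lambda>y. complex_of_real (mpow (snd y) (snd p)) * (Ar y * \<phi> y)) pt)"
    unfolding Ptr_tx_rep by (simp add: case_prod_beta)
  also have "\<dots> \<le> (\<Sum>p\<in>midx_le M. norm (c (fst p) (snd p) * (-1)^mabs (fst p) *
            pds (dirs_x (fst p)) (\<lambda>y. complex_of_real (mpow (snd y) (snd p)) * (Ar y * \<phi> y)) pt))"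
    by (rule norm_sum)
  also have "\<dots> \<le> (\<Sum>p\<in>midx_le M. norm (c (fst p) (snd p)) *
        (B * sum_list (map (\<lambda>ab. norm (pds (map g (fst ab)) (F (snd p)) pt) * kX (snd ab)) (lb (idx_list (fst p))))))"
    by (intro sum_mono) (auto simp: norm_mult norm_power intro!: mult_left_mono trm)
  also have "\<dots> = B * (\<Sum>p\<in>midx_le M. norm (c (fst p) (snd p)) *
        sum_list (map (\<lambda>ab. norm (pds (map g (fst ab)) (F (snd p)) pt) * kX (snd ab)) (lb (idx_list (fst p)))))"
    by (simp add: sum_distrib_left algebra_simps)
  finally show ?thesis unfolding g_def kX_def F_def .
qed

lemma norm_ins_sign[simp]: "norm (ins_sign r K) = 1"
  by (simp add: ins_sign_def norm_power)

lemma u_dual: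
  fixes a :: "'m::{finite,linorder} \<Rightarrow> (real,'m) vec \<Rightarrow> real"
    and c :: "('n::{finite,linorder} \<Rightarrow> nat) \<Rightarrow> ('n \<Rightarrow> nat) \<Rightarrow> complex"
  assumes a_sm: "\<And>r. smooth (a r)"
  shows "F_dual \<mu> (Lop c M a (\<lambda>K (\<psi>::('m,'n) fn). if K = K0 then \<psi> p0 else 0) K)"
proof -
  define A where "A r = (\<lambda>y::(real,'m) vec \<times> (real,'n) vec. complex_of_real (a r (fst y)))" for r
  define D where "D r F = pd ((axis r (1::real), 0) :: (real,'m) vec \<times> (real,'n) vec) F" for r and F :: "('m,'n) fn"
  define T where "T r F = Ptr_tx c M (\<lambda>y. A r y * F y)" for r and F :: "('m,'n) fn"
  define l where "l r F = - D r F p0 + \<i> * T r F p0" for r F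
  have smA: "smooth (A r)" for r unfolding A_def by (intro smooth_fst smooth_of_real a_sm)
  have Lv: "Lop c M a (\<lambda>K (\<psi>::('m,'n) fn). if K = K0 then \<psi> p0 else 0) K \<psi> = (\<Sum>r\<in>K. ins_sign r K * (if K - {r} = K0 then l r \<psi> else 0))" for \<psi>
    unfolding Lop_def l_def D_def T_def A_def by (intro sum.cong refl) auto
  have lin_l: "l r (\<lambda>y. x * \<phi> y + z * \<psi> y) = x * l r \<phi> + z * l r \<psi>" if \<phi>: "smooth \<phi>" and \<psi>: "smooth \<psi>" for r x z \<phi> \<psi>
  proof -
    have d: "D r (\<lambda>y. x * \<phi> y + z * \<psi> y) p0 = x * D r \<phi> p0 + z * D r \<psi> p0"
      unfolding D_def by (rule pd_lin) (auto intro: smooth_diff \<phi> \<psi>)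
    have "T r (\<lambda>y. x * \<phi> y + z * \<psi> y) = Ptr_tx c M (\<lambda>y. x * (A r y * \<phi> y) + z * (A r y * \<psi> y))"
      unfolding T_def by (simp add: algebra_simps)
    also have "\<dots> = (\<lambda>y. x * T r \<phi> y + z * T r \<psi> y)"
      unfolding T_def by (rule Ptr_tx_lin) (auto intro: smooth_mult smA \<phi> \<psi>)
    finally show ?thesis unfolding l_def d by (simp add: algebra_simps)
  qed
  show ?thesis
    unfolding F_dual_def
  proof (intro conjI ballI allI impI)
    fix \<phi> \<psi> :: "('m,'n) fn" and x z :: complex
    assume \<phi>: "\<phi> \<in> F_space \<mu>" and \<psi>: "\<psi> \<in> F_space \<mu>"
    have "(\<Sum>r\<in>K. ins_sign r K * (if K - {r} = K0 then l r (\<lambda>y. x * \<phi> y + z * \<psi> y) else 0))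
       = (\<Sum>r\<in>K. x * (ins_sign r K * (if K - {r} = K0 then l r \<phi> else 0)) + z * (ins_sign r K * (if K - {r} = K0 then l r \<psi> else 0)))"
      by (intro sum.cong refl) (auto simp: lin_l[OF F_space_smooth[OF \<phi>] F_space_smooth[OF \<psi>]] algebra_simps)
    also have "\<dots> = x * (\<Sum>r\<in>K. ins_sign r K * (if K - {r} = K0 then l r \<phi> else 0)) + z * (\<Sum>r\<in>K. ins_sign r K * (if K - {r} = K0 then l r \<psi> else 0))"
      by (simp add: sum.distrib sum_distrib_left)
    finally show "Lop c M a (\<lambda>K \<psi>. if K = K0 then \<psi> p0 else 0) K (\<lambda>y. x * \<phi> y + z * \<psi> y) =
           x * Lop c M a (\<lambda>K \<psi>. if K = K0 then \<psi> p0 else 0) K \<phi> + z * Lop c M a (\<lambda>K \<psi>. if K = K0 then \<psi> p0 else 0) K \<psi>"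
      unfolding Lv .
  next
    fix \<sigma> C :: real assume "\<sigma> > 1" "C > 0"
    define kD where "kD r = C ^ mabs (\<lambda>i. count_list [r] i) * mfact (\<lambda>i. count_list [r] i) powr \<sigma>" for r :: 'm
    define kT where "kT r = (\<Sum>p\<in>midx_le M. norm (c (fst p) (snd p)) *
       sum_list (map (\<lambda>ab. norm (pds (map (\<lambda>i. ((0::(real,'m) vec), axis i (1::real))) (fst ab))
                  (\<lambda>y. complex_of_real (mpow (snd y) (snd p)) * A r y) p0)
                * (C ^ mabs (\<lambda>i. count_list (snd ab) i) * (mfact (\<lambda>i. count_list (snd ab) i)) powr \<mu>))
              (lb (idx_list (fst p)))))" for r :: 'm
    show "\<exists>K'. \<forall>\<phi> B. \<phi> \<in> S_space \<sigma> \<mu> C \<longrightarrow> S_bound \<sigma> \<mu> C \<phi> B \<longrightarrow>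
        norm (Lop c M a (\<lambda>K \<psi>. if K = K0 then \<psi> p0 else 0) K \<phi>) \<le> K' * B"
    proof (intro exI[of _ "\<Sum>r\<in>K. if K - {r} = K0 then kD r + kT r else 0"] allI impI)
      fix \<phi> :: "('m,'n) fn" and B assume S: "\<phi> \<in> S_space \<sigma> \<mu> C" and SB: "S_bound \<sigma> \<mu> C \<phi> B"
      have \<phi>: "smooth \<phi>" using S by (simp add: S_space_def)
      have lb: "norm (l r \<phi>) \<le> B * kD r + B * kT r" for r
      proof -
        have "norm (l r \<phi>) \<le> norm (D r \<phi> p0) + norm (T r \<phi> p0)"
          unfolding l_def using norm_triangle_ineq[of "- D r \<phi> p0" "\<i> * T r \<phi> p0"] by (simp add: norm_mult)
        also have "\<dots> \<le> B * kD r + B * kT r"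
        proof (rule add_mono)
          show "norm (D r \<phi> p0) \<le> B * kD r" unfolding D_def kD_def by (rule S_bound_D[OF SB])
          show "norm (T r \<phi> p0) \<le> B * kT r" unfolding T_def kT_def by (rule T_bound[OF \<phi> SB smA])
        qed
        finally show ?thesis .
      qed
      have "norm (\<Sum>r\<in>K. ins_sign r K * (if K - {r} = K0 then l r \<phi> else 0))
          \<le> (\<Sum>r\<in>K. norm (ins_sign r K * (if K - {r} = K0 then l r \<phi> else 0)))"
        by (rule norm_sum)
      also have "\<dots> \<le> (\<Sum>r\<in>K. (if K - {r} = K0 then kD r + kT r else 0) * B)"
        by (intro sum_mono) (auto simp: norm_mult lb algebra_simps)
      also have "\<dots> = (\<Sum>r\<in>K. if K - {r} = K0 then kD r + kT r else 0) * B"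
        by (simp add: sum_distrib_right)
      finally show "norm (Lop c M a (\<lambda>K \<psi>. if K = K0 then \<psi> p0 else 0) K \<phi>) \<le> (\<Sum>r\<in>K. if K - {r} = K0 then kD r + kT r else 0) * B"
        unfolding Lv .
    qed
  qed
qed

section \<open>Test functions\<close>

lemma pds_tsep:
  fixes E :: "'a::euclidean_space \<Rightarrow> complex" and H :: "'b::euclidean_space \<Rightarrow> complex"
  assumes E: "smooth E" and H: "smooth H" and vs: "set vs \<subseteq> Basis"
  shows "pds (map (\<lambda>v. (v, 0::'b)) vs) (\<lambda>y. E (fst y) * H (snd y)) = (\<lambda>y. pds vs E (fst y) * H (snd y))"
  using vs
proof (induction vs)
  case Nil then show ?case by simp
next
  case (Cons v vs)
  then have vs': "set vs \<subseteq> Basis" by simp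
  show ?case
  proof (rule ext)
    fix y
    have "pds (map (\<lambda>v. (v, 0::'b)) (v#vs)) (\<lambda>y. E (fst y) * H (snd y)) y = pd (v, 0) (\<lambda>y. pds vs E (fst y) * H (snd y)) y"
      using Cons.IH[OF vs'] by simp
    also have "\<dots> = pd (v, 0) (\<lambda>y. pds vs E (fst y)) y * H (snd y) + pds vs E (fst y) * pd (v, 0::'b) (\<lambda>y. H (snd y)) y"
      by (rule pd_mult) (rule diff_fst, rule pds_diff[OF E vs'], rule diff_snd, rule smooth_diff[OF H])
    also have "\<dots> = pd v (pds vs E) (fst y) * H (snd y)"
      by (simp add: pd_fst_fun pd_snd_fun)
    finally show "pds (map (\<lambda>v. (v, 0::'b)) (v#vs)) (\<lambda>y. E (fst y) * H (snd y)) y = pds (v#vs) E (fst y) * H (snd y)"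
      by simp
  qed
qed

lemma pds_xsep:
  fixes E :: "'a::euclidean_space \<Rightarrow> complex" and H :: "'b::euclidean_space \<Rightarrow> complex"
  assumes E: "smooth E" and H: "smooth H" and vs: "set vs \<subseteq> Basis"
  shows "pds (map (\<lambda>v. (0::'a, v)) vs) (\<lambda>y. E (fst y) * H (snd y)) = (\<lambda>y. E (fst y) * pds vs H (snd y))"
  using vs
proof (induction vs)
  case Nil then show ?case by simp
next
  case (Cons v vs)
  then have vs': "set vs \<subseteq> Basis" by simp
  show ?case
  proof (rule ext)
    fix y
    have "pds (map (\<lambda>v. (0::'a, v)) (v#vs)) (\<lambda>y. E (fst y) * H (snd y)) y = pd (0, v) (\<lambda>y. E (fst y) * pds vs H (snd y)) y"
      using Cons.IH[OF vs'] by simp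
    also have "\<dots> = pd (0::'a, v) (\<lambda>y. E (fst y)) y * pds vs H (snd y) + E (fst y) * pd (0, v) (\<lambda>y. pds vs H (snd y)) y"
      by (rule pd_mult) (rule diff_fst, rule smooth_diff[OF E], rule diff_snd, rule pds_diff[OF H vs'])
    also have "\<dots> = E (fst y) * pd v (pds vs H) (snd y)"
      by (simp add: pd_fst_fun pd_snd_fun)
    finally show "pds (map (\<lambda>v. (0::'a, v)) (v#vs)) (\<lambda>y. E (fst y) * H (snd y)) y = E (fst y) * pds (v#vs) H (snd y)"
      by simp
  qed
qed

lemma ek_periodic: "ek k r0 (t + (2 * pi) *\<^sub>R axis r 1) = ek k r0 t"
proof (cases "r = r0")
  case True
  have "\<i> * complex_of_real (real k * (t $ r0 + 2 * pi)) = \<i> * complex_of_real (real k * t $ r0) + of_nat k * (2 * of_real pi * \<i>)"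
    by (simp add: algebra_simps)
  then have "ek k r0 (t + (2 * pi) *\<^sub>R axis r 1) = exp (\<i> * complex_of_real (real k * t $ r0)) * exp (2 * of_real pi * \<i>) ^ k"
    using True by (simp add: ek_def exp_add exp_of_nat_mult axis_def)
  then show ?thesis by (simp add: ek_def)
next
  case False then show ?thesis by (simp add: ek_def axis_def)
qed

lemma tf_F_space:
  fixes h :: "(real,'n::{finite,linorder}) vec \<Rightarrow> complex" and r0 :: "'m::{finite,linorder}"
  assumes GS: "GS_half h" and mu: "\<mu> \<ge> 1/2"
  shows "(\<lambda>y. ek k r0 (fst y) * h (snd y)) \<in> F_space \<mu>"
proof -
  obtain Ch where Ch: "Ch > 0" and hb: "\<And>\<alpha> \<beta> x. \<bar>mpow x \<alpha>\<bar> * norm (Dk \<beta> h x) \<le> Ch ^ (mabs \<alpha> + mabs \<beta> + 1) * (mfact \<alpha> * mfact \<beta>) powr (1/2)"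
    using GS unfolding GS_half_def by blast
  have hs: "smooth h" using GS unfolding GS_half_def by blast
  define C where "C = max (max 1 (real k)) Ch"
  have C0: "C > 0" and Ck: "real k \<le> C" and CCh: "Ch \<le> C" unfolding C_def by auto
  define tf where "tf = (\<lambda>y::(real,'m) vec \<times> (real,'n) vec. ek k r0 (fst y) * h (snd y))"
  have sm: "smooth tf" unfolding tf_def by (intro smooth_mult smooth_fst smooth_snd smooth_ek hs)
  have per: "t_periodic tf" unfolding t_periodic_def tf_def by (simp add: ek_periodic)
  have SB: "S_bound 2 \<mu> C tf Ch"
    unfolding S_bound_def
  proof (intro allI)
    fix \<alpha> \<beta> :: "'n \<Rightarrow> nat" and \<gamma> :: "'m \<Rightarrow> nat" and t x
    define vt where "vt = map (\<lambda>r. axis r (1::real)) (idx_list \<gamma>)"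
    define vx where "vx = map (\<lambda>i. axis i (1::real)) (idx_list \<beta>)"
    have vtB: "set vt \<subseteq> Basis" and vxB: "set vx \<subseteq> Basis" unfolding vt_def vx_def by auto
    have dt: "dirs_t \<gamma> = map (\<lambda>v. (v, 0::(real,'n) vec)) vt" unfolding dirs_t_def vt_def by simp
    have dx: "dirs_x \<beta> = map (\<lambda>v. (0::(real,'m) vec, v)) vx" unfolding dirs_x_def vx_def by simp
    have val: "pds (dirs_x \<beta> @ dirs_t \<gamma>) tf (t, x) = pds vt (ek k r0) t * Dk \<beta> h x"
      unfolding pds_append dt dx tf_def pds_tsep[OF smooth_ek hs vtB] pds_xsep[OF smooth_pds[OF smooth_ek vtB] hs vxB]
      by (simp add: Dk_def vx_def)
    have e1: "norm (pds vt (ek k r0) t) \<le> real k ^ mabs \<gamma>"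
    proof -
      have "norm (pds vt (ek k r0) t) = norm (prod_list (map (\<lambda>v. \<i> * complex_of_real (real k * v $ r0)) vt))"
        by (simp add: pds_ek norm_mult)
      also have "\<dots> \<le> real k ^ length vt"
        by (rule norm_prod_list_ek) (auto simp: vt_def axis_def)
      finally show ?thesis by (simp add: vt_def length_idx)
    qed
    define P where "P = mfact \<alpha> * mfact \<beta>"
    have P1: "1 \<le> P" unfolding P_def using mfact_ge1[of \<alpha>] mfact_ge1[of \<beta>] by (metis mult_mono one_le_mult_iff order.trans zero_le_one mult_1)
    have A1: "norm (pds vt (ek k r0) t) * (\<bar>mpow x \<alpha>\<bar> * norm (Dk \<beta> h x)) \<le> real k ^ mabs \<gamma> * (Ch ^ (mabs \<alpha> + mabs \<beta> + 1) * P powr (1/2))"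
      unfolding P_def by (rule mult_mono[OF e1 hb]) auto
    have A2: "real k ^ mabs \<gamma> * (Ch ^ (mabs \<alpha> + mabs \<beta> + 1) * P powr (1/2)) \<le> C ^ mabs \<gamma> * (Ch * C ^ (mabs \<alpha> + mabs \<beta>) * P powr \<mu>)"
    proof (rule mult_mono)
      show "real k ^ mabs \<gamma> \<le> C ^ mabs \<gamma>" by (rule power_mono[OF Ck]) simp
      have "Ch ^ (mabs \<alpha> + mabs \<beta> + 1) = Ch * Ch ^ (mabs \<alpha> + mabs \<beta>)" by simp
      also have "\<dots> \<le> Ch * C ^ (mabs \<alpha> + mabs \<beta>)" using Ch by (intro mult_left_mono power_mono CCh) auto
      finally have "Ch ^ (mabs \<alpha> + mabs \<beta> + 1) \<le> Ch * C ^ (mabs \<alpha> + mabs \<beta>)" .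
      moreover have "P powr (1/2) \<le> P powr \<mu>" using P1 mu by (intro powr_mono) auto
      ultimately show "Ch ^ (mabs \<alpha> + mabs \<beta> + 1) * P powr (1/2) \<le> Ch * C ^ (mabs \<alpha> + mabs \<beta>) * P powr \<mu>"
        using Ch C0 by (intro mult_mono) auto
    qed (use C0 Ch in auto)
    have A3: "C ^ mabs \<gamma> * (Ch * C ^ (mabs \<alpha> + mabs \<beta>) * P powr \<mu>) \<le> Ch * C ^ (mabs \<alpha> + mabs \<beta> + mabs \<gamma>) * mfact \<gamma> powr 2 * P powr \<mu>"
    proof -
      have m: "1 \<le> mfact \<gamma> powr 2" using mfact_ge1[of \<gamma>] by (intro ge_one_powr_ge_zero) auto
      have "C ^ mabs \<gamma> * (Ch * C ^ (mabs \<alpha> + mabs \<beta>) * P powr \<mu>) = (Ch * C ^ (mabs \<alpha> + mabs \<beta> + mabs \<gamma>) * P powr \<mu>) * 1"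
        by (simp add: power_add algebra_simps)
      also have "\<dots> \<le> (Ch * C ^ (mabs \<alpha> + mabs \<beta> + mabs \<gamma>) * P powr \<mu>) * mfact \<gamma> powr 2"
        using Ch C0 by (intro mult_left_mono m) auto
      finally show ?thesis by (simp add: algebra_simps)
    qed
    have "\<bar>mpow x \<alpha>\<bar> * norm (pds (dirs_x \<beta> @ dirs_t \<gamma>) tf (t, x)) = norm (pds vt (ek k r0) t) * (\<bar>mpow x \<alpha>\<bar> * norm (Dk \<beta> h x))"
      unfolding val by (simp add: norm_mult algebra_simps)
    also have "\<dots> \<le> Ch * C ^ (mabs \<alpha> + mabs \<beta> + mabs \<gamma>) * mfact \<gamma> powr 2 * P powr \<mu>"
      using A1 A2 A3 by linarith
    finally show "\<bar>mpow x \<alpha>\<bar> * norm (pds (dirs_x \<beta> @ dirs_t \<gamma>) tf (t, x)) \<le> Ch * C ^ (mabs \<alpha> + mabs \<beta> + mabs \<gamma>) * mfact \<gamma> powr 2 * (mfact \<alpha> * mfact \<beta>) powr \<mu>"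
      unfolding P_def .
  qed
  have "tf \<in> S_space 2 \<mu> C" unfolding S_space_def using sm per SB by blast
  then show ?thesis unfolding F_space_def tf_def using C0 by force
qed

lemma ek_zero[simp]: "ek k r0 0 = 1" by (simp add: ek_def)

lemma pairing_bound:
  fixes f :: "('m::finite,'n::finite) fn" and h :: "(real,'n) vec \<Rightarrow> complex" and E :: "(real,'m) vec \<Rightarrow> complex"
  assumes E: "\<And>t. norm (E t) = 1"
  shows "norm (pairing f (\<lambda>y. E (fst y) * h (snd y)))
    \<le> (LINT y:(cbox (0::(real,'m) vec) (\<chi> r. 2*pi) \<times> UNIV)|lborel. norm (f y) * norm (h (snd y)))"
proof -
  define S where "S = cbox (0::(real,'m) vec) (\<chi> r. 2*pi) \<times> (UNIV :: (real,'n) vec set)"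
  have "norm (pairing f (\<lambda>y. E (fst y) * h (snd y))) = norm (LINT y|lborel. indicator S y *\<^sub>R (f y * (E (fst y) * h (snd y))))"
    by (simp add: pairing_def set_lebesgue_integral_def S_def)
  also have "\<dots> \<le> (LINT y|lborel. norm (indicator S y *\<^sub>R (f y * (E (fst y) * h (snd y)))))"
    by (rule integral_norm_bound)
  also have "\<dots> = (LINT y|lborel. indicator S y *\<^sub>R (norm (f y) * norm (h (snd y))))"
    by (rule Bochner_Integration.integral_cong) (auto simp: norm_mult indicator_def E)
  also have "\<dots> = (LINT y:S|lborel. norm (f y) * norm (h (snd y)))"
    by (simp add: set_lebesgue_integral_def)
  finally show ?thesis by (simp add: S_def)
qed

theorem theorem5p2:
  fixes a :: "'m::{finite,linorder} \<Rightarrow> (real, 'm) vec \<Rightarrow> real"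
    and c :: "('n::{finite,linorder} \<Rightarrow> nat) \<Rightarrow> ('n \<Rightarrow> nat) \<Rightarrow> complex"
    and M p :: nat and \<sigma> \<mu> :: real
  assumes m2: "CARD('m) \<ge> 2"
    and p_range: "1 \<le> p" "p \<le> CARD('m) - 1"
    and sigma: "\<sigma> > 1"
    and a_gevrey: "\<forall>r. gevrey_torus \<sigma> (a r)"
    and a_closed: "closed_1form a"
    and M2: "M \<ge> 2"
    and c_order: "\<forall>\<alpha> \<beta>. mabs \<alpha> + mabs \<beta> > M \<longrightarrow> c \<alpha> \<beta> = 0"
    and P_elliptic: "globally_elliptic c M"
    and P_normal: "normal_op c M"
    and P_spectrum: "real_spectral_basis c M"
    and mu: "\<mu> \<ge> 1/2"
  shows "\<exists>u :: ('m, 'n) dform.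
           F_dual_form \<mu> p u \<and> \<not> F_form \<mu> p u \<and> F_form \<mu> (p + 1) (Lop c M a u)"
proof -
  have a_sm: "\<And>r. smooth (a r)" using a_gevrey unfolding gevrey_torus_def by blast
  obtain lam \<phi>s where SPEC: "(\<forall>j. GS_half (\<phi>s j) \<and> Pop c M (\<phi>s j) = (\<lambda>x. complex_of_real (lam j) * \<phi>s j x)) \<and>
        filterlim (\<lambda>j. \<bar>lam j\<bar>) at_top sequentially \<and>
        (\<forall>j k. integrable lborel (\<lambda>x. \<phi>s j x * cnj (\<phi>s k x)) \<and>
               (LINT x|lborel. \<phi>s j x * cnj (\<phi>s k x)) = (if j = k then 1 else 0)) \<and>
        (\<forall>f :: (real, 'n) vec \<Rightarrow> complex. f \<in> borel_measurable lborel \<and>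
               integrable lborel (\<lambda>x. (norm (f x))\<^sup>2) \<and>
               (\<forall>j. (LINT x|lborel. f x * cnj (\<phi>s j x)) = 0)
               \<longrightarrow> (AE x in lborel. f x = 0))"
    using P_spectrum unfolding real_spectral_basis_def by blast
  define h where "h = \<phi>s 0"
  have GS: "GS_half h" using SPEC unfolding h_def by blast
  have nrm: "(LINT x|lborel. h x * cnj (h x)) = 1" using SPEC unfolding h_def by auto
  obtain x0 where hx0: "h x0 \<noteq> 0"
  proof -
    have "\<exists>x0. h x0 \<noteq> 0"
    proof (rule ccontr)
      assume "\<not> (\<exists>x0. h x0 \<noteq> 0)"
      then have "(\<lambda>x. h x * cnj (h x)) = (\<lambda>_. 0)" by auto
      then show False using nrm by simp
    qed
    then show ?thesis using that by blast
  qed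
  obtain r0 :: 'm where True by blast
  have cardm: "card (UNIV - {r0}) = CARD('m) - 1" by (simp add: card_Diff_singleton)
  then have "p - 1 \<le> card (UNIV - {r0})" using p_range by simp
  then obtain K0 where K0sub: "K0 \<subseteq> UNIV - {r0}" and cK0: "card K0 = p - 1"
    using obtain_subset_with_card_n by metis
  have r0K0: "r0 \<notin> K0" using K0sub by auto
  define p0 where "p0 = ((0::(real,'m) vec), x0)"
  define v0 where "v0 = (\<lambda>K (\<psi>::('m,'n) fn). if K = K0 then \<psi> p0 else 0)"
  define u where "u = Lop c M a v0"
  have dual: "F_dual_form \<mu> p u"
    unfolding F_dual_form_def u_def v0_def by (intro allI impI u_dual a_sm)
  have LL: "F_form \<mu> (p + 1) (Lop c M a u)"
    unfolding F_form_def represented_by_F_def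
  proof (intro allI impI bexI[of _ "\<lambda>_. 0"] ballI)
    fix J :: "'m set" and \<phi> :: "('m,'n) fn" assume "\<phi> \<in> F_space \<mu>"
    then have "Lop c M a u J \<phi> = 0"
      unfolding u_def v0_def by (rule Lop_Lop_zero[OF a_sm a_closed F_space_smooth])
    then show "Lop c M a u J \<phi> = pairing (\<lambda>_. 0) \<phi>" by (simp add: pairing_def)
  qed (rule zero_F_space)
  have notF: "\<not> F_form \<mu> p u"
  proof
    assume FF: "F_form \<mu> p u"
    define K1 where "K1 = insert r0 K0"
    have cK1: "card K1 = p" unfolding K1_def using r0K0 cK0 p_range by simp
    obtain f where fF: "f \<in> F_space \<mu>" and rep: "\<And>\<phi>. \<phi> \<in> F_space \<mu> \<Longrightarrow> u K1 \<phi> = pairing f \<phi>"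
      using FF cK1 unfolding F_form_def represented_by_F_def by blast
    define Z where "Z = Ptr c M (\<lambda>x. complex_of_real (a r0 0) * h x) x0"
    define R where "R = (LINT y:(cbox (0::(real,'m) vec) (\<chi> r. 2*pi) \<times> UNIV)|lborel. norm (f y) * norm (h (snd y)))"
    define tf where "tf k = (\<lambda>y::(real,'m) vec \<times> (real,'n) vec. ek k r0 (fst y) * h (snd y))" for k
    have hs: "smooth h" using GS unfolding GS_half_def by blast
    have uK1: "u K1 \<phi> = ins_sign r0 K1 * (- pd (axis r0 1, 0) \<phi> p0 + \<i> * Ptr_tx c M (\<lambda>y. complex_of_real (a r0 (fst y)) * \<phi> y) p0)" for \<phi>
    proof -
      have "u K1 \<phi> = (\<Sum>r\<in>K1. ins_sign r K1 * (if K1 - {r} = K0 then - pd (axis r 1, 0) \<phi> p0 + \<i> * Ptr_tx c M (\<lambda>y. complex_of_real (a r (fst y)) * \<phi> y) p0 else 0))"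
        unfolding u_def v0_def Lop_def by (intro sum.cong refl) auto
      also have "\<dots> = ins_sign r0 K1 * (- pd (axis r0 1, 0) \<phi> p0 + \<i> * Ptr_tx c M (\<lambda>y. complex_of_real (a r0 (fst y)) * \<phi> y) p0)"
      proof -
        have e: "K1 - {r} = K0 \<longleftrightarrow> r = r0" if "r \<in> K1" for r
          using that r0K0 unfolding K1_def by auto
        have "(\<Sum>r\<in>K1. ins_sign r K1 * (if K1 - {r} = K0 then - pd (axis r 1, 0) \<phi> p0 + \<i> * Ptr_tx c M (\<lambda>y. complex_of_real (a r (fst y)) * \<phi> y) p0 else 0))
          = (\<Sum>r\<in>K1. if r = r0 then ins_sign r K1 * (- pd (axis r 1, 0) \<phi> p0 + \<i> * Ptr_tx c M (\<lambda>y. complex_of_real (a r (fst y)) * \<phi> y) p0) else 0)"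
          by (intro sum.cong refl) (auto simp: e)
        also have "\<dots> = ins_sign r0 K1 * (- pd (axis r0 1, 0) \<phi> p0 + \<i> * Ptr_tx c M (\<lambda>y. complex_of_real (a r0 (fst y)) * \<phi> y) p0)"
          by (simp add: K1_def)
        finally show ?thesis .
      qed
      finally show ?thesis .
    qed
    have Dk: "pd (axis r0 1, 0) (tf k) p0 = \<i> * of_nat k * h x0" for k
    proof -
      have "pds (map (\<lambda>v. (v, 0::(real,'n) vec)) [axis r0 (1::real)]) (tf k) = (\<lambda>y. pds [axis r0 1] (ek k r0) (fst y) * h (snd y))"
        unfolding tf_def by (rule pds_tsep[OF smooth_ek hs]) simp
      then have "pd (axis r0 1, 0) (tf k) = (\<lambda>y. pd (axis r0 1) (ek k r0) (fst y) * h (snd y))" by simp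
      then show ?thesis by (simp add: p0_def pd_ek axis_def)
    qed
    have Tk: "Ptr_tx c M (\<lambda>y. complex_of_real (a r0 (fst y)) * tf k y) p0 = Z" for k
      unfolding Ptr_tx_def p0_def tf_def Z_def by simp
    have bound: "real k * norm (h x0) \<le> R + norm Z" for k
    proof -
      have "tf k \<in> F_space \<mu>" unfolding tf_def by (rule tf_F_space[OF GS mu])
      then have eq: "u K1 (tf k) = pairing f (tf k)" by (rule rep)
      have "norm (pairing f (tf k)) \<le> R" unfolding tf_def R_def by (rule pairing_bound) simp
      moreover have "norm (u K1 (tf k)) = norm (- (of_nat k * h x0) + Z)"
      proof -
        have "u K1 (tf k) = (ins_sign r0 K1 * \<i>) * (- (of_nat k * h x0) + Z)"
          unfolding uK1 Dk Tk by (simp add: algebra_simps)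
        then show ?thesis by (simp add: norm_mult)
      qed
      moreover have "real k * norm (h x0) - norm Z \<le> norm (- (of_nat k * h x0) + Z)"
      proof -
        have "norm (- (of_nat k * h x0) + Z) = norm (of_nat k * h x0 - Z)"
          by (simp add: norm_minus_commute)
        moreover have "norm (of_nat k * h x0) - norm Z \<le> norm (of_nat k * h x0 - Z)"
          by (rule norm_triangle_ineq2)
        ultimately show ?thesis by (simp add: norm_mult)
      qed
      ultimately show ?thesis using eq by auto
    qed
    obtain k :: nat where "(R + norm Z) / norm (h x0) < real k" using reals_Archimedean2 by blast
    then have "R + norm Z < real k * norm (h x0)" using hx0 by (simp add: field_simps)
    with bound[of k] show False by linarith
  qed
  show ?thesis using dual notF LL unfolding u_def by blast
qed

end
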